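(* Let $M\ge1$, $N\ge0$, and let $v_1,\dots,v_N$ be nonzero complex numbers with $v_j^{-2}\neq\beta$; put $z_j=(v_j^{-2}-\beta)^{-1}$. For every tuple $\{n\}=(n_0,\dots,n_{M-1})$ of nonnegative integers with $\sum_kn_k=N$ and associated partition $\lambda$, $$\langle\{n\}|\Psi(\{v\}_N)\rangle=\prod_{j=1}^N(v_j^{-1}-\beta v_j)^{M-1}\,G_\lambda(z_1,\dots,z_N;\beta),\qquad \langle\Psi(\{v\}_N)|\{n\}\rangle=\prod_{j=1}^N(v_j^{-1}-\beta v_j)^{M-1}\,G_{\lambda^\vee}(z_1,\dots,z_N;\beta),$$ where $\lambda^\vee_j=M-1-\lambda_{N+1-j}$ (whenever the $z_j$ are pairwise distinct; otherwise by polynomial continuation).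
   Context: Non-Hermitian phase model: $\beta\in\mathbb{C}$. $\mathcal{F}$ is the Fock space with orthonormal basis $|n\rangle$ ($n\ge0$); $\phi|n\rangle=|n-1\rangle$, $\phi|0\rangle=0$, $\phi^\dagger|n\rangle=|n+1\rangle$, $\pi|n\rangle=\delta_{n,0}|n\rangle$. Sites $0,\dots,M-1$ carry $\mathcal{F}_0,\dots,\mathcal{F}_{M-1}$. With $W_a=\mathbb{C}^2$ (basis $|0\rangle_a,|1\rangle_a$), $\mathcal{L}_{aj}(v)=\begin{pmatrix}v^{-1}-\beta v\pi_j&\phi_j^\dagger\\ \phi_j&v\end{pmatrix}$ (rows/columns indexed by $0,1$ in $W_a$), $\mathcal{T}_a(v)=\mathcal{L}_{a,M-1}(v)\cdots\mathcal{L}_{a,0}(v)=\begin{pmatrix}\mathcal{A}&\mathcal{B}\\ \mathcal{C}&\mathcal{D}\end{pmatrix}(v)$. Vacuum $|\Omega\rangle=\otimes_j|0\rangle_j$; $|\Psi(\{v\}_N)\rangle=\prod_{j=1}^N\mathcal{B}(v_j)|\Omega\rangle$, $\langle\Psi(\{v\}_N)|=\langle\Omega|\prod_{j=1}^N\mathcal{C}(v_j)$. $|\{n\}\rangle=\otimes_{j=0}^{M-1}|n_j\rangle_j$. The partition associated with $\{n\}$ is the weakly decreasing length-$N$ sequence $\lambda=((M-1)^{n_{M-1}},\dots,1^{n_1},0^{n_0})$. Grothendieck polynomial: $G_\lambda(z_1,\dots,z_N;\beta)=\det_{1\le j,k\le N}\big(z_j^{\lambda_k+N-k}(1+\beta z_j)^{k-1}\big)/\prod_{1\le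 j<k\le N}(z_j-z_k)$. *)

theory Defs
  imports "HOL-Analysis.Analysis" "Jordan_Normal_Form.Determinant"
begin

(* States of the M-site Fock space: coefficient functions on occupation
   configurations {n} = [n_0,...,n_(M-1)] (lists of length M).
   Operators act on coefficient functions; <{n}|psi> = psi {n}. *)
type_synonym fvec = "nat list \<Rightarrow> complex"
type_synonym fop = "fvec \<Rightarrow> fvec"

(* phi_j |n> = |n - e_j>  (0 if n_j = 0) *)
definition phi_op :: "nat \<Rightarrow> fop" where
  "phi_op j \<psi> = (\<lambda>n. \<psi> (n[j := n ! j + 1]))"

(* phi_j^dagger |n> = |n + e_j> *)
definition phid_op :: "nat \<Rightarrow> fop" where
  "phid_op j \<psi> = (\<lambda>n. if n ! j = 0 then 0 else \<psi> (n[j := n ! j - 1]))"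

definition pi_op :: "nat \<Rightarrow> fop" where
  "pi_op j \<psi> = (\<lambda>n. if n ! j = 0 then \<psi> n else 0)"

definition Lop :: "complex \<Rightarrow> nat \<Rightarrow> complex \<Rightarrow> nat \<Rightarrow> nat \<Rightarrow> fop" where
  "Lop \<beta> j v a b =
     (if a = 0 \<and> b = 0 then (\<lambda>\<psi> n. inverse v * \<psi> n - \<beta> * v * pi_op j \<psi> n)
      else if a = 0 then phid_op j
      else if b = 0 then phi_op j
      else (\<lambda>\<psi> n. v * \<psi> n))"

definition opmat_mult :: "(nat \<Rightarrow> nat \<Rightarrow> fop) \<Rightarrow> (nat \<Rightarrow> nat \<Rightarrow> fop) \<Rightarrow> nat \<Rightarrow> nat \<Rightarrow> fop" where
  "opmat_mult X Y a b = (\<lambda>\<psi> n. \<Sum>c<2. X a c (Y c b \<psi>) n)"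

fun monodromy :: "complex \<Rightarrow> nat \<Rightarrow> complex \<Rightarrow> nat \<Rightarrow> nat \<Rightarrow> fop" where
  "monodromy \<beta> 0 v = (\<lambda>a b. if a = b then (\<lambda>\<psi>. \<psi>) else (\<lambda>\<psi> n. 0))"
| "monodromy \<beta> (Suc m) v = opmat_mult (Lop \<beta> m v) (monodromy \<beta> m v)"

definition Bop :: "complex \<Rightarrow> nat \<Rightarrow> complex \<Rightarrow> fop" where
  "Bop \<beta> M v = monodromy \<beta> M v 0 1"

definition Cop :: "complex \<Rightarrow> nat \<Rightarrow> complex \<Rightarrow> fop" where
  "Cop \<beta> M v = monodromy \<beta> M v 1 0"

definition ket :: "nat list \<Rightarrow> fvec" where
  "ket m = (\<lambda>n. if n = m then 1 else 0)"

definition vacuum :: "nat \<Rightarrow> fvec" where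
  "vacuum M = ket (replicate M 0)"

(* |Psi({v}_N)> = B(v_1) ... B(v_N) |Omega>, with v_1..v_N stored as v 0 .. v (N-1) *)
definition Psi_ket :: "complex \<Rightarrow> nat \<Rightarrow> nat \<Rightarrow> (nat \<Rightarrow> complex) \<Rightarrow> fvec" where
  "Psi_ket \<beta> M N v = foldr (\<lambda>j \<psi>. Bop \<beta> M (v j) \<psi>) [0..<N] (vacuum M)"

definition amp_ket :: "complex \<Rightarrow> nat \<Rightarrow> nat \<Rightarrow> (nat \<Rightarrow> complex) \<Rightarrow> nat list \<Rightarrow> complex" where
  "amp_ket \<beta> M N v n = Psi_ket \<beta> M N v n"

(* <Psi({v}_N)|{n}> = <Omega| C(v_1) ... C(v_N) |{n}> *)
definition amp_bra :: "complex \<Rightarrow> nat \<Rightarrow> nat \<Rightarrow> (nat \<Rightarrow> complex) \<Rightarrow> nat list \<Rightarrow> complex" where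
  "amp_bra \<beta> M N v n = foldr (\<lambda>j \<psi>. Cop \<beta> M (v j) \<psi>) [0..<N] (ket n) (replicate M 0)"

(* partition ((M-1)^{n_{M-1}}, ..., 1^{n_1}, 0^{n_0}) as a weakly decreasing list;
   lambda_k (1-based) is entry k-1 *)
definition partition_of :: "nat list \<Rightarrow> nat list" where
  "partition_of n = concat (map (\<lambda>k. replicate (n ! k) k) (rev [0..<length n]))"

definition dual_partition :: "nat \<Rightarrow> nat list \<Rightarrow> nat list" where
  "dual_partition M lam = map (\<lambda>x. M - 1 - x) (rev lam)"

definition vandermonde :: "nat \<Rightarrow> (nat \<Rightarrow> complex) \<Rightarrow> complex" where
  "vandermonde N z = (\<Prod>(j,k) \<in> {(j,k). j < k \<and> k < N}. z j - z k)"

definition groth_ratio :: "nat \<Rightarrow> nat list \<Rightarrow> complex \<Rightarrow> (nat \<Rightarrow> complex) \<Rightarrow> complex" where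
  "groth_ratio N lam \<beta> z =
     det (mat N N (\<lambda>(j,k). z j ^ (lam ! k + (N - 1 - k)) * (1 + \<beta> * z j) ^ k)) / vandermonde N z"

(* Grothendieck polynomial G_lam(z_1..z_N; beta): the ratio for pairwise distinct z,
   and its (polynomial, hence continuous) continuation otherwise, given as the limit
   over pairwise distinct points (only the first N coordinates vary). *)
definition grothendieck :: "nat \<Rightarrow> nat list \<Rightarrow> complex \<Rightarrow> (nat \<Rightarrow> complex) \<Rightarrow> complex" where
  "grothendieck N lam \<beta> z =
     (if inj_on z {..<N} then groth_ratio N lam \<beta> z
      else Lim (at z within {w. inj_on w {..<N} \<and> (\<forall>k\<ge>N. w k = z k)})
               (groth_ratio N lam \<beta>))"

end

theory Submission
  imports Defs
begin



definition loc :: "complex \<Rightarrow> complex \<Rightarrow> nat \<Rightarrow> nat \<Rightarrow> nat \<Rightarrow> nat \<Rightarrow> complex" where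
 "loc \<beta> v a b x y = (if a = 0 \<and> b = 0 then (if x = y then inverse v - (if y = 0 then \<beta> * v else 0) else 0)
   else if a = 0 then (if x = Suc y then 1 else 0)
   else if b = 0 then (if Suc x = y then 1 else 0)
   else (if x = y then v else 0))"

fun Pth :: "complex \<Rightarrow> complex \<Rightarrow> nat \<Rightarrow> nat \<Rightarrow> nat \<Rightarrow> nat list \<Rightarrow> nat list \<Rightarrow> complex" where
  "Pth \<beta> v 0 a b n m = (if a = b then 1 else 0)"
| "Pth \<beta> v (Suc M) a b n m = (\<Sum>c<2. loc \<beta> v a c (n!M) (m!M) * Pth \<beta> v M c b n m)"

definition Sset :: "nat \<Rightarrow> nat list \<Rightarrow> nat list set" where
  "Sset M n = {m. length m = length n \<and> (\<forall>j<M. m!j \<le> n!j + 1) \<and> (\<forall>j. M \<le> j \<longrightarrow> j < length n \<longrightarrow> m!j = n!j)}"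

lemma Sset_finite: "finite (Sset M n)"
proof -
  have "Sset M n \<subseteq> {xs. set xs \<subseteq> {..Max (set n) + 1} \<and> length xs = length n}"
  proof
    fix m assume m: "m \<in> Sset M n"
    have "\<forall>x\<in>set m. x \<le> Max (set n) + 1"
    proof
      fix x assume "x \<in> set m"
      then obtain j where j: "j < length m" "m!j = x" by (auto simp: in_set_conv_nth)
      have jn: "j < length n" using j m by (auto simp: Sset_def)
      have "n!j \<le> Max (set n)" using jn by auto
      moreover have "m!j \<le> n!j + 1" using m jn unfolding Sset_def
        by (cases "j < M") auto
      ultimately show "x \<le> Max (set n) + 1" using j by simp
    qed
    then show "m \<in> {xs. set xs \<subseteq> {..Max (set n) + 1} \<and> length xs = length n}"
      using m by (auto simp: Sset_def)
  qed
  moreover have "finite {xs. set xs \<subseteq> {..Max (set n) + 1} \<and> length xs = length n}"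
    by (rule finite_lists_length_eq) auto
  ultimately show ?thesis by (rule finite_subset)
qed

lemma Pth_cong: "(\<And>j. j < M \<Longrightarrow> n!j = n'!j) \<Longrightarrow> (\<And>j. j < M \<Longrightarrow> m!j = m'!j) \<Longrightarrow>
   Pth \<beta> v M a b n m = Pth \<beta> v M a b n' m'"
  by (induction M arbitrary: a) auto

lemma sum_single:
  assumes "finite A" "a \<in> A" "\<And>x. x \<in> A \<Longrightarrow> x \<noteq> a \<Longrightarrow> f x = 0"
  shows "sum f A = f a"
proof -
  have "sum f A = f a + sum f (A - {a})" using assms by (simp add: sum.remove)
  also have "sum f (A - {a}) = 0" using assms by (intro sum.neutral) auto
  finally show ?thesis by simp
qed

lemma Lop_sum:
  assumes "M < length n"
  shows "Lop \<beta> M v a c \<xi> n = (\<Sum>y\<in>{..n!M+1}. loc \<beta> v a c (n!M) y * \<xi> (n[M:=y]))"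
proof -
  have fin: "finite {..n!M+1}" by simp
  consider "a = 0 \<and> c = 0" | "a = 0 \<and> c \<noteq> 0" | "a \<noteq> 0 \<and> c = 0" | "a \<noteq> 0 \<and> c \<noteq> 0" by blast
  then show ?thesis
  proof cases
    case 1
    have "(\<Sum>y\<in>{..n!M+1}. loc \<beta> v a c (n!M) y * \<xi> (n[M:=y])) = loc \<beta> v a c (n!M) (n!M) * \<xi> (n[M:=n!M])"
      by (rule sum_single) (use 1 in \<open>auto simp: loc_def\<close>)
    moreover have "Lop \<beta> M v a c \<xi> n = loc \<beta> v a c (n!M) (n!M) * \<xi> n"
      using 1 by (simp add: Lop_def loc_def pi_op_def algebra_simps)
    ultimately show ?thesis by simp
  next
    case 2
    show ?thesis
    proof (cases "n!M = 0")
      case True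
      then show ?thesis using 2 by (auto simp: Lop_def loc_def phid_op_def intro!: sum.neutral)
    next
      case False
      have "(\<Sum>y\<in>{..n!M+1}. loc \<beta> v a c (n!M) y * \<xi> (n[M:=y])) = loc \<beta> v a c (n!M) (n!M - 1) * \<xi> (n[M:=n!M - 1])"
        by (rule sum_single) (use 2 False in \<open>auto simp: loc_def\<close>)
      then show ?thesis using 2 False by (simp add: Lop_def loc_def phid_op_def)
    qed
  next
    case 3
    have "(\<Sum>y\<in>{..n!M+1}. loc \<beta> v a c (n!M) y * \<xi> (n[M:=y])) = loc \<beta> v a c (n!M) (n!M + 1) * \<xi> (n[M:=n!M + 1])"
      by (rule sum_single) (use 3 in \<open>auto simp: loc_def\<close>)
    then show ?thesis using 3 by (simp add: Lop_def loc_def phi_op_def)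
  next
    case 4
    have "(\<Sum>y\<in>{..n!M+1}. loc \<beta> v a c (n!M) y * \<xi> (n[M:=y])) = loc \<beta> v a c (n!M) (n!M) * \<xi> (n[M:=n!M])"
      by (rule sum_single) (use 4 in \<open>auto simp: loc_def\<close>)
    then show ?thesis using 4 by (simp add: Lop_def loc_def)
  qed
qed

lemma Sset_Suc:
  assumes "M < length n"
  shows "Sset (Suc M) n = (\<Union>y\<in>{..n!M+1}. Sset M (n[M:=y]))"
proof (intro equalityI subsetI)
  fix m assume m: "m \<in> Sset (Suc M) n"
  then have "m \<in> Sset M (n[M:=m!M])" using assms
    by (auto simp: Sset_def nth_list_update less_Suc_eq)
  moreover have "m!M \<le> n!M + 1" using m by (auto simp: Sset_def)
  ultimately show "m \<in> (\<Union>y\<in>{..n!M+1}. Sset M (n[M:=y]))" by auto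
next
  fix m assume "m \<in> (\<Union>y\<in>{..n!M+1}. Sset M (n[M:=y]))"
  then obtain y where y: "y \<le> n!M+1" "m \<in> Sset M (n[M:=y])" by auto
  then show "m \<in> Sset (Suc M) n" using assms
    by (auto simp: Sset_def nth_list_update less_Suc_eq)
qed

lemma MatEl:
  assumes "M \<le> length n"
  shows "monodromy \<beta> M v a b \<psi> n = (\<Sum>m\<in>Sset M n. Pth \<beta> v M a b n m * \<psi> m)"
  using assms
proof (induction M arbitrary: a n)
  case 0
  have "Sset 0 n = {n}" by (auto simp: Sset_def intro: nth_equalityI)
  then show ?case by simp
next
  case (Suc M)
  have hlt: "M < length n" using Suc.prems by simp
  have "monodromy \<beta> (Suc M) v a b \<psi> n = (\<Sum>c<2. Lop \<beta> M v a c (monodromy \<beta> M v c b \<psi>) n)"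
    by (simp add: opmat_mult_def)
  also have "\<dots> = (\<Sum>c<2. \<Sum>y\<in>{..n!M+1}. loc \<beta> v a c (n!M) y *
       (\<Sum>m\<in>Sset M (n[M:=y]). Pth \<beta> v M c b (n[M:=y]) m * \<psi> m))"
    using hlt Suc.IH[of "n[M:=_]"] by (simp add: Lop_sum)
  also have "\<dots> = (\<Sum>c<2. \<Sum>y\<in>{..n!M+1}. \<Sum>m\<in>Sset M (n[M:=y]).
        loc \<beta> v a c (n!M) (m!M) * Pth \<beta> v M c b n m * \<psi> m)"
  proof (intro sum.cong refl)
    fix c y assume "y \<in> {..n!M+1}"
    have "loc \<beta> v a c (n!M) y * (\<Sum>m\<in>Sset M (n[M:=y]). Pth \<beta> v M c b (n[M:=y]) m * \<psi> m)
      = (\<Sum>m\<in>Sset M (n[M:=y]). loc \<beta> v a c (n!M) y * (Pth \<beta> v M c b (n[M:=y]) m * \<psi> m))"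
      by (simp add: sum_distrib_left)
    also have "\<dots> = (\<Sum>m\<in>Sset M (n[M:=y]). loc \<beta> v a c (n!M) (m!M) * Pth \<beta> v M c b n m * \<psi> m)"
    proof (intro sum.cong refl)
      fix m assume "m \<in> Sset M (n[M:=y])"
      then have "m!M = y" using hlt by (auto simp: Sset_def)
      moreover have "Pth \<beta> v M c b (n[M:=y]) m = Pth \<beta> v M c b n m"
        by (rule Pth_cong) auto
      ultimately show "loc \<beta> v a c (n!M) y * (Pth \<beta> v M c b (n[M:=y]) m * \<psi> m) =
         loc \<beta> v a c (n!M) (m!M) * Pth \<beta> v M c b n m * \<psi> m" by simp
    qed
    finally show "loc \<beta> v a c (n!M) y * (\<Sum>m\<in>Sset M (n[M:=y]). Pth \<beta> v M c b (n[M:=y]) m * \<psi> m) =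
      (\<Sum>m\<in>Sset M (n[M:=y]). loc \<beta> v a c (n!M) (m!M) * Pth \<beta> v M c b n m * \<psi> m)" .
  qed
  also have "\<dots> = (\<Sum>c<2. \<Sum>m\<in>Sset (Suc M) n. loc \<beta> v a c (n!M) (m!M) * Pth \<beta> v M c b n m * \<psi> m)"
  proof (intro sum.cong refl)
    fix c
    have disj: "\<forall>y\<in>{..n!M+1}. \<forall>y'\<in>{..n!M+1}. y \<noteq> y' \<longrightarrow> Sset M (n[M:=y]) \<inter> Sset M (n[M:=y']) = {}"
      using hlt by (auto simp: Sset_def)
    show "(\<Sum>y\<in>{..n!M+1}. \<Sum>m\<in>Sset M (n[M:=y]). loc \<beta> v a c (n!M) (m!M) * Pth \<beta> v M c b n m * \<psi> m) =
       (\<Sum>m\<in>Sset (Suc M) n. loc \<beta> v a c (n!M) (m!M) * Pth \<beta> v M c b n m * \<psi> m)"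
      unfolding Sset_Suc[OF hlt]
      by (rule sum.UNION_disjoint[symmetric]) (use disj Sset_finite in auto)
  qed
  also have "\<dots> = (\<Sum>m\<in>Sset (Suc M) n. Pth \<beta> v (Suc M) a b n m * \<psi> m)"
    by (subst sum.swap) (simp add: sum_distrib_right)
  finally show ?case .
qed




lemma loc_nz: "loc \<beta> v a b x y \<noteq> 0 \<Longrightarrow> x \<le> y + 1 \<and> y \<le> x + 1"
  by (auto simp: loc_def split: if_splits)

lemma loc_transp: "loc \<beta> v a b x y = loc \<beta> v b a y x"
  by (auto simp: loc_def)

lemma Pth_nz: "Pth \<beta> v M a b n m \<noteq> 0 \<Longrightarrow> j < M \<Longrightarrow> n!j \<le> m!j + 1 \<and> m!j \<le> n!j + 1"
proof (induction M arbitrary: a)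
  case 0 then show ?case by simp
next
  case (Suc M)
  have "(\<Sum>c<2. loc \<beta> v a c (n!M) (m!M) * Pth \<beta> v M c b n m) \<noteq> 0" using Suc.prems(1) by simp
  then obtain c where c: "loc \<beta> v a c (n!M) (m!M) * Pth \<beta> v M c b n m \<noteq> 0"
    by (rule sum.not_neutral_contains_not_neutral)
  show ?case
  proof (cases "j = M")
    case True then show ?thesis using c loc_nz by fastforce
  next
    case False then show ?thesis using c Suc.IH[of c] Suc.prems(2) by auto
  qed
qed

lemma sum2: "(\<Sum>c<(2::nat). f c) = f 0 + f 1"
  by (simp add: numeral_2_eq_2)

lemma Pth_bottom:
  assumes "a < 2" "b < 2"
  shows "Pth \<beta> v (Suc M) a b (x#n) (y#m) = (\<Sum>c<2. Pth \<beta> v M a c n m * loc \<beta> v c b x y)"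
  using assms(1)
proof (induction M arbitrary: a)
  case 0
  show ?case using 0 assms(2) by (cases a; cases b) (auto simp: sum2)
next
  case (Suc M)
  have "Pth \<beta> v (Suc (Suc M)) a b (x#n) (y#m) =
     (\<Sum>c<2. loc \<beta> v a c (n!M) (m!M) * (\<Sum>d<2. Pth \<beta> v M c d n m * loc \<beta> v d b x y))"
    using Suc.IH by (simp add: sum2)
  also have "\<dots> = (\<Sum>d<2. (\<Sum>c<2. loc \<beta> v a c (n!M) (m!M) * Pth \<beta> v M c d n m) * loc \<beta> v d b x y)"
    unfolding sum2 by (simp only: distrib_left distrib_right mult.assoc add_ac)
  finally show ?case by simp
qed

lemma Pth_rev:
  "a < 2 \<Longrightarrow> b < 2 \<Longrightarrow> length n = M \<Longrightarrow> length m = M \<Longrightarrow> Pth \<beta> v M a b n m = Pth \<beta> v M b a (rev m) (rev n)"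
proof (induction M arbitrary: a b n m)
  case 0 then show ?case by auto
next
  case (Suc M)
  obtain n0 x where n: "n = n0 @ [x]" using Suc.prems(3) by (cases n rule: rev_cases) auto
  obtain m0 y where m: "m = m0 @ [y]" using Suc.prems(4) by (cases m rule: rev_cases) auto
  have l: "length n0 = M" "length m0 = M" using n m Suc.prems by auto
  have c1: "Pth \<beta> v M c b (n0@[x]) (m0@[y]) = Pth \<beta> v M c b n0 m0" for c
    by (rule Pth_cong) (use l in \<open>auto simp: nth_append\<close>)
  have "Pth \<beta> v (Suc M) a b n m = (\<Sum>c<2. loc \<beta> v a c x y * Pth \<beta> v M c b n0 m0)"
    using l by (simp add: c1 n m nth_append)
  also have "\<dots> = (\<Sum>c<2. Pth \<beta> v M b c (rev m0) (rev n0) * loc \<beta> v c a y x)"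
    using Suc.IH[OF _ _ l] Suc.prems(1,2) by (simp add: sum2 loc_transp[of \<beta> v a _ x y] mult.commute)
  also have "\<dots> = Pth \<beta> v (Suc M) b a (rev m) (rev n)"
    using Suc.prems(1,2) by (simp only: n m rev_append rev.simps append.simps Pth_bottom)
  finally show ?case .
qed

lemma Psi_ket_Suc: "Psi_ket \<beta> M (Suc N) v = Bop \<beta> M (v 0) (Psi_ket \<beta> M N (v \<circ> Suc))"
proof -
  have "[0..<Suc N] = 0 # map Suc [0..<N]" by (simp add: upt_conv_Cons map_Suc_upt)
  then show ?thesis by (simp add: Psi_ket_def foldr_map o_def)
qed

lemma amp_ket_Suc:
  assumes "length n = M"
  shows "amp_ket \<beta> M (Suc N) v n = (\<Sum>m\<in>Sset M n. Pth \<beta> (v 0) M 0 1 n m * amp_ket \<beta> M N (v \<circ> Suc) m)"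
  using assms by (simp add: amp_ket_def Psi_ket_Suc Bop_def MatEl)

definition FC :: "complex \<Rightarrow> nat \<Rightarrow> nat \<Rightarrow> (nat \<Rightarrow> complex) \<Rightarrow> fvec \<Rightarrow> fvec" where
  "FC \<beta> M N v \<psi> = foldr (\<lambda>j \<psi>. Cop \<beta> M (v j) \<psi>) [0..<N] \<psi>"

lemma FC_Suc: "FC \<beta> M (Suc N) v \<psi> = Cop \<beta> M (v 0) (FC \<beta> M N (v \<circ> Suc) \<psi>)"
proof -
  have "[0..<Suc N] = 0 # map Suc [0..<N]" by (simp add: upt_conv_Cons map_Suc_upt)
  then show ?thesis by (simp add: FC_def foldr_map o_def)
qed

lemma FC_lin:
  assumes "finite X" "\<And>m. length m = M \<Longrightarrow> \<psi> m = (\<Sum>x\<in>X. c x * \<phi> x m)" "length n = M"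
  shows "FC \<beta> M N v \<psi> n = (\<Sum>x\<in>X. c x * FC \<beta> M N v (\<phi> x) n)"
  using assms(2,3)
proof (induction N arbitrary: v n)
  case 0 then show ?case by (simp add: FC_def)
next
  case (Suc N)
  have len: "\<And>m. m \<in> Sset M n \<Longrightarrow> length m = M" using Suc.prems by (auto simp: Sset_def)
  have "FC \<beta> M (Suc N) v \<psi> n = (\<Sum>m\<in>Sset M n. Pth \<beta> (v 0) M 1 0 n m * FC \<beta> M N (v \<circ> Suc) \<psi> m)"
    using Suc.prems by (simp add: FC_Suc Cop_def MatEl)
  also have "\<dots> = (\<Sum>m\<in>Sset M n. Pth \<beta> (v 0) M 1 0 n m * (\<Sum>x\<in>X. c x * FC \<beta> M N (v \<circ> Suc) (\<phi> x) m))"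
    using Suc.IH[OF Suc.prems(1)] len by (intro sum.cong) auto
  also have "\<dots> = (\<Sum>x\<in>X. c x * (\<Sum>m\<in>Sset M n. Pth \<beta> (v 0) M 1 0 n m * FC \<beta> M N (v \<circ> Suc) (\<phi> x) m))"
    apply (simp add: sum_distrib_left mult.left_commute)
    by (rule sum.swap)
  also have "\<dots> = (\<Sum>x\<in>X. c x * FC \<beta> M (Suc N) v (\<phi> x) n)"
    using Suc.prems by (simp add: FC_Suc Cop_def MatEl)
  finally show ?case .
qed

lemma amp_bra_FC: "amp_bra \<beta> M N v n = FC \<beta> M N v (ket n) (replicate M 0)"
  by (simp add: amp_bra_def FC_def)

lemma Sset_len: "length n = M \<Longrightarrow> Sset M n = {m. length m = M \<and> (\<forall>j<M. m!j \<le> n!j + 1)}"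
  by (auto simp: Sset_def)

lemma amp_bra_Suc:
  assumes "length n = M"
  shows "amp_bra \<beta> M (Suc N) v n = (\<Sum>m\<in>Sset M (rev n). Pth \<beta> (v N) M 0 1 (rev n) m * amp_bra \<beta> M N v (rev m))"
proof -
  have sp: "[0..<Suc N] = [0..<N] @ [N]" by simp
  have "amp_bra \<beta> M (Suc N) v n = FC \<beta> M N v (Cop \<beta> M (v N) (ket n)) (replicate M 0)"
    by (simp add: amp_bra_def FC_def sp)
  also have "\<dots> = (\<Sum>x\<in>Sset M n. Pth \<beta> (v N) M 1 0 x n * FC \<beta> M N v (ket x) (replicate M 0))"
  proof (rule FC_lin)
    show "finite (Sset M n)" by (rule Sset_finite)
    fix m :: "nat list" assume lm: "length m = M"
    have "Cop \<beta> M (v N) (ket n) m = (\<Sum>y\<in>Sset M m. Pth \<beta> (v N) M 1 0 m y * ket n y)"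
      using lm by (simp add: Cop_def MatEl)
    also have "\<dots> = (if n \<in> Sset M m then Pth \<beta> (v N) M 1 0 m n else 0)"
      by (auto simp: ket_def Sset_finite if_distrib cong: if_cong)
    also have "\<dots> = Pth \<beta> (v N) M 1 0 m n"
      using Pth_nz[of \<beta> "v N" M 1 0 m n] lm assms by (auto simp: Sset_len)
    also have "\<dots> = (\<Sum>x\<in>Sset M n. Pth \<beta> (v N) M 1 0 x n * ket x m)"
    proof (cases "m \<in> Sset M n")
      case True then show ?thesis by (simp add: ket_def Sset_finite if_distrib cong: if_cong)
    next
      case False
      then obtain j where "j < M" "m!j > n!j + 1" using lm assms by (auto simp: Sset_len)
      then have "Pth \<beta> (v N) M 1 0 m n = 0" using Pth_nz[of \<beta> "v N" M 1 0 m n] by force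
      then show ?thesis using False by (auto simp: ket_def intro!: sum.neutral)
    qed
    finally show "Cop \<beta> M (v N) (ket n) m = (\<Sum>x\<in>Sset M n. Pth \<beta> (v N) M 1 0 x n * ket x m)" .
  qed simp
  also have "\<dots> = (\<Sum>x\<in>Sset M n. Pth \<beta> (v N) M 0 1 (rev n) (rev x) * amp_bra \<beta> M N v x)"
  proof (intro sum.cong refl)
    fix x assume "x \<in> Sset M n"
    then have "length x = M" using assms by (simp add: Sset_len)
    then show "Pth \<beta> (v N) M 1 0 x n * FC \<beta> M N v (ket x) (replicate M 0) =
      Pth \<beta> (v N) M 0 1 (rev n) (rev x) * amp_bra \<beta> M N v x"
      using Pth_rev[of 1 0 x M n \<beta> "v N"] assms by (simp add: amp_bra_FC)
  qed
  also have "\<dots> = (\<Sum>m\<in>Sset M (rev n). Pth \<beta> (v N) M 0 1 (rev n) m * amp_bra \<beta> M N v (rev m))"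
  proof (rule sum.reindex_bij_witness[of _ rev rev])
    show "\<And>a. a \<in> Sset M (rev n) \<Longrightarrow> rev (rev a) = a" by simp
    show "\<And>a. a \<in> Sset M (rev n) \<Longrightarrow> rev a \<in> Sset M n"
    proof -
      fix a assume a: "a \<in> Sset M (rev n)"
      have "rev a ! j \<le> n ! j + 1" if j: "j < M" for j
      proof -
        have "a ! (M - Suc j) \<le> rev n ! (M - Suc j) + 1" using a j assms by (auto simp: Sset_len)
        moreover have "rev n ! (M - Suc j) = n ! j" using j assms by (simp add: rev_nth)
        moreover have "rev a ! j = a ! (M - Suc j)" using j a assms by (simp add: rev_nth Sset_len)
        ultimately show ?thesis by simp
      qed
      then show "rev a \<in> Sset M n" using a assms by (auto simp: Sset_len)
    qed
    show "\<And>a. a \<in> Sset M n \<Longrightarrow> rev (rev a) = a" by simp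
    show "\<And>a. a \<in> Sset M n \<Longrightarrow> rev a \<in> Sset M (rev n)"
      using assms by (auto simp: Sset_len rev_nth)
    show "\<And>a. a \<in> Sset M n \<Longrightarrow> Pth \<beta> (v N) M 0 1 (rev n) (rev a) * amp_bra \<beta> M N v (rev (rev a))
        = Pth \<beta> (v N) M 0 1 (rev n) (rev a) * amp_bra \<beta> M N v a" by simp
  qed
  finally show ?thesis .
qed




definition conf :: "nat \<Rightarrow> nat list \<Rightarrow> nat list" where
  "conf M mu = map (\<lambda>j. count_list mu j) [0..<M]"

fun bx :: "nat \<Rightarrow> nat list \<Rightarrow> nat list set" where
  "bx h [] = {[]}"
| "bx h (a # r) = (\<lambda>(y, mu). y # mu) ` ({a..h} \<times> bx a r)"

fun lastv :: "nat \<Rightarrow> nat list \<Rightarrow> nat" where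
  "lastv h [] = h"
| "lastv h (a # r) = lastv a r"

fun wt :: "complex \<Rightarrow> complex \<Rightarrow> nat \<Rightarrow> nat list \<Rightarrow> nat list \<Rightarrow> complex" where
  "wt \<beta> x h (a # r) (y # mu) = x ^ (h - y) * (1 - \<beta> * x) ^ (y - a - 1) * wt \<beta> x a r mu"
| "wt \<beta> x h _ _ = 1"

definition SB :: "complex \<Rightarrow> nat \<Rightarrow> complex \<Rightarrow> nat list \<Rightarrow> (nat list \<Rightarrow> complex) \<Rightarrow> complex" where
  "SB \<beta> M x lam g = (case lam of [] \<Rightarrow> 0 | a # r \<Rightarrow>
      (\<Sum>mu\<in>bx a r. x ^ lastv a r * (1 - \<beta> * x) ^ (M - 1 - a) * wt \<beta> x a r mu * g mu))"

definition SD :: "complex \<Rightarrow> nat \<Rightarrow> complex \<Rightarrow> nat list \<Rightarrow> (nat list \<Rightarrow> complex) \<Rightarrow> complex" where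
  "SD \<beta> M x lam g = (\<Sum>mu\<in>bx (M - 1) lam. x ^ Suc (lastv (M - 1) lam) * wt \<beta> x (M - 1) lam mu * g mu)"

lemma bx_finite: "finite (bx h r)"
  by (induction r arbitrary: h) auto

lemma bx_le: "mu \<in> bx h r \<Longrightarrow> e \<in> set mu \<Longrightarrow> e \<le> h"
proof (induction r arbitrary: h mu)
  case Nil then show ?case by simp
next
  case (Cons a r)
  then obtain y mu' where y: "mu = y # mu'" "a \<le> y" "y \<le> h" "mu' \<in> bx a r" by auto
  show ?case
  proof (cases "e = y")
    case True then show ?thesis using y by simp
  next
    case False
    then have "e \<in> set mu'" using Cons.prems y by simp
    then have "e \<le> a" using Cons.IH y by blast
    then show ?thesis using y by simp
  qed
qed

lemma sum_bx_Cons: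
  "(\<Sum>mu\<in>bx h (a#r). F mu) = (\<Sum>y\<in>{a..h}. \<Sum>mu\<in>bx a r. F (y # mu))"
proof -
  have inj: "inj_on (\<lambda>(y, mu). y # mu) ({a..h} \<times> bx a r)" by (auto simp: inj_on_def)
  have "(\<Sum>mu\<in>bx h (a#r). F mu) = sum (F \<circ> (\<lambda>(y, mu). y # mu)) ({a..h} \<times> bx a r)"
    unfolding bx.simps by (rule sum.reindex[OF inj])
  also have "\<dots> = (\<Sum>(y, mu)\<in>{a..h} \<times> bx a r. F (y # mu))"
    by (rule sum.cong) auto
  also have "\<dots> = (\<Sum>y\<in>{a..h}. \<Sum>mu\<in>bx a r. F (y # mu))"
    by (rule sum.cartesian_product[symmetric])
  finally show ?thesis .
qed

lemma bx_rep: "bx M (replicate c M @ r) = (\<lambda>mu. replicate c M @ mu) ` bx M r"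
proof (induction c)
  case 0 then show ?case by simp
next
  case (Suc c)
  have "bx M (replicate (Suc c) M @ r) = (\<lambda>(y, mu). y # mu) ` ({M} \<times> bx M (replicate c M @ r))"
    by simp
  also have "\<dots> = (\<lambda>mu. replicate (Suc c) M @ mu) ` bx M r"
    unfolding Suc by auto
  finally show ?case .
qed

lemma sum_bx_rep: "(\<Sum>mu\<in>bx M (replicate c M @ r). F mu) = (\<Sum>mu\<in>bx M r. F (replicate c M @ mu))"
proof -
  have inj: "inj_on (\<lambda>mu. replicate c M @ mu) (bx M r)" by (auto simp: inj_on_def)
  show ?thesis unfolding bx_rep by (simp add: sum.reindex[OF inj])
qed

lemma wt_rep: "wt \<beta> x M (replicate c M @ r) (replicate c M @ mu) = wt \<beta> x M r mu"
  by (induction c) auto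

lemma lastv_rep: "lastv M (replicate c M @ r) = lastv M r"
  by (induction c) auto

lemma rep_shift: "replicate c M @ M # mu = M # replicate c M @ mu"
  by (induction c) auto

lemma C0:
  assumes "\<forall>e\<in>set lam. e < M"
  shows "SB \<beta> (Suc M) x lam g = (1 - \<beta> * x) * SB \<beta> M x lam g"
proof (cases lam)
  case Nil then show ?thesis by (simp add: SB_def)
next
  case (Cons a r)
  then have a: "a < M" using assms by auto
  then have e: "M - a = Suc (M - Suc a)" by simp
  show ?thesis unfolding SB_def Cons
    by (simp add: e sum_distrib_left algebra_simps sum_subtractf)
qed

lemma C1:
  assumes "M \<ge> 1" "\<forall>e\<in>set lam. e < M"
  shows "SB \<beta> (Suc M) x (replicate (Suc c) M @ lam) g =
     SB \<beta> M x lam (\<lambda>mu. g (replicate (Suc c) M @ mu)) + SD \<beta> M x lam (\<lambda>mu. g (replicate c M @ mu))"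
proof -
  have L: "SB \<beta> (Suc M) x (replicate (Suc c) M @ lam) g =
     (\<Sum>mu\<in>bx M lam. x ^ lastv M lam * wt \<beta> x M lam mu * g (replicate c M @ mu))"
    by (simp add: SB_def sum_bx_rep wt_rep lastv_rep)
  show ?thesis
  proof (cases lam)
    case Nil
    have xM: "x ^ M = x * x ^ (M - 1)" using assms by (cases M) auto
    then show ?thesis using L Nil by (simp add: SB_def SD_def)
  next
    case (Cons a r)
    have a: "a < M" using assms Cons by auto
    have split: "{a..M} = insert M {a..M-1}" using a assms by auto
    have "(\<Sum>mu\<in>bx M lam. x ^ lastv M lam * wt \<beta> x M lam mu * g (replicate c M @ mu)) =
      (\<Sum>y\<in>{a..M}. \<Sum>mu\<in>bx a r. x ^ lastv a r * (x ^ (M - y) * (1 - \<beta> * x) ^ (y - a - 1) * wt \<beta> x a r mu)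
          * g (replicate c M @ y # mu))"
      unfolding Cons sum_bx_Cons by simp
    also have "\<dots> = (\<Sum>mu\<in>bx a r. x ^ lastv a r * ((1 - \<beta> * x) ^ (M - 1 - a) * wt \<beta> x a r mu)
          * g (replicate (Suc c) M @ mu)) +
        (\<Sum>y\<in>{a..M-1}. \<Sum>mu\<in>bx a r. x ^ lastv a r * (x ^ (M - y) * (1 - \<beta> * x) ^ (y - a - 1) * wt \<beta> x a r mu)
          * g (replicate c M @ y # mu))"
      unfolding split by (subst sum.insert) (use assms in \<open>auto simp: bx_finite rep_shift\<close>)
    also have "\<dots> = SB \<beta> M x lam (\<lambda>mu. g (replicate (Suc c) M @ mu)) + SD \<beta> M x lam (\<lambda>mu. g (replicate c M @ mu))"
    proof -
      have "(\<Sum>y\<in>{a..M-1}. \<Sum>mu\<in>bx a r. x ^ lastv a r * (x ^ (M - y) * (1 - \<beta> * x) ^ (y - a - 1) * wt \<beta> x a r mu)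
          * g (replicate c M @ y # mu)) =
         (\<Sum>y\<in>{a..M-1}. \<Sum>mu\<in>bx a r. x ^ Suc (lastv a r) * (x ^ (M - 1 - y) * (1 - \<beta> * x) ^ (y - a - 1) * wt \<beta> x a r mu)
          * g (replicate c M @ y # mu))"
      proof (intro sum.cong refl)
        fix y mu assume "y \<in> {a..M-1}"
        then have "M - y = Suc (M - 1 - y)" using assms by auto
        then show "x ^ lastv a r * (x ^ (M - y) * (1 - \<beta> * x) ^ (y - a - 1) * wt \<beta> x a r mu) * g (replicate c M @ y # mu) =
           x ^ Suc (lastv a r) * (x ^ (M - 1 - y) * (1 - \<beta> * x) ^ (y - a - 1) * wt \<beta> x a r mu) * g (replicate c M @ y # mu)"
          by (simp add: algebra_simps)
      qed
      then show ?thesis unfolding SB_def SD_def Cons sum_bx_Cons by (simp add: algebra_simps)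
    qed
    finally show ?thesis using L by simp
  qed
qed

lemma C2:
  assumes "M \<ge> 1" "\<forall>e\<in>set lam. e < M"
  shows "SD \<beta> (Suc M) x (replicate c M @ lam) g =
     x * SB \<beta> M x lam (\<lambda>mu. g (replicate (Suc c) M @ mu)) + x * SD \<beta> M x lam (\<lambda>mu. g (replicate c M @ mu))"
proof -
  have L: "SD \<beta> (Suc M) x (replicate c M @ lam) g =
     (\<Sum>mu\<in>bx M lam. x ^ Suc (lastv M lam) * wt \<beta> x M lam mu * g (replicate c M @ mu))"
    by (simp add: SD_def sum_bx_rep wt_rep lastv_rep)
  show ?thesis
  proof (cases lam)
    case Nil
    have "M = Suc (M - 1)" using assms by simp
    then have "x ^ Suc M = x * x ^ Suc (M - 1)" by (metis power_Suc)
    have xM: "x ^ M = x * x ^ (M - 1)" using assms by (cases M) auto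
    then show ?thesis using L Nil by (simp add: SB_def SD_def)
  next
    case (Cons a r)
    have a: "a < M" using assms Cons by auto
    have split: "{a..M} = insert M {a..M-1}" using a assms by auto
    have "(\<Sum>mu\<in>bx M lam. x ^ Suc (lastv M lam) * wt \<beta> x M lam mu * g (replicate c M @ mu)) =
      (\<Sum>y\<in>{a..M}. \<Sum>mu\<in>bx a r. x ^ Suc (lastv a r) * (x ^ (M - y) * (1 - \<beta> * x) ^ (y - a - 1) * wt \<beta> x a r mu)
          * g (replicate c M @ y # mu))"
      unfolding Cons sum_bx_Cons by simp
    also have "\<dots> = (\<Sum>mu\<in>bx a r. x ^ Suc (lastv a r) * ((1 - \<beta> * x) ^ (M - 1 - a) * wt \<beta> x a r mu)
          * g (replicate (Suc c) M @ mu)) +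
        (\<Sum>y\<in>{a..M-1}. \<Sum>mu\<in>bx a r. x ^ Suc (lastv a r) * (x ^ (M - y) * (1 - \<beta> * x) ^ (y - a - 1) * wt \<beta> x a r mu)
          * g (replicate c M @ y # mu))"
      unfolding split by (subst sum.insert) (use assms in \<open>auto simp: bx_finite rep_shift\<close>)
    also have "\<dots> = x * SB \<beta> M x lam (\<lambda>mu. g (replicate (Suc c) M @ mu)) + x * SD \<beta> M x lam (\<lambda>mu. g (replicate c M @ mu))"
    proof -
      have "(\<Sum>y\<in>{a..M-1}. \<Sum>mu\<in>bx a r. x ^ Suc (lastv a r) * (x ^ (M - y) * (1 - \<beta> * x) ^ (y - a - 1) * wt \<beta> x a r mu)
          * g (replicate c M @ y # mu)) =
         (\<Sum>y\<in>{a..M-1}. \<Sum>mu\<in>bx a r. x * (x ^ Suc (lastv a r) * (x ^ (M - 1 - y) * (1 - \<beta> * x) ^ (y - a - 1) * wt \<beta> x a r mu)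
          * g (replicate c M @ y # mu)))"
      proof (intro sum.cong refl)
        fix y mu assume "y \<in> {a..M-1}"
        then have "M - y = Suc (M - 1 - y)" using assms by auto
        then show "x ^ Suc (lastv a r) * (x ^ (M - y) * (1 - \<beta> * x) ^ (y - a - 1) * wt \<beta> x a r mu) * g (replicate c M @ y # mu) =
           x * (x ^ Suc (lastv a r) * (x ^ (M - 1 - y) * (1 - \<beta> * x) ^ (y - a - 1) * wt \<beta> x a r mu) * g (replicate c M @ y # mu))"
          by (simp add: algebra_simps)
      qed
      then show ?thesis unfolding SB_def SD_def Cons sum_bx_Cons by (simp add: algebra_simps sum_distrib_left)
    qed
    finally show ?thesis using L by simp
  qed
qed




lemma partition_of_snoc:
  assumes "length n = M"
  shows "partition_of (n @ [c]) = replicate c M @ partition_of n"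
proof -
  have m: "map (\<lambda>k. replicate ((n @ [c]) ! k) k) (rev [0..<M]) = map (\<lambda>k. replicate (n ! k) k) (rev [0..<M])"
    using assms by (auto simp: nth_append)
  have c: "(n @ [c]) ! M = c" by (metis assms nth_append_length)
  have "partition_of (n @ [c]) = replicate ((n @ [c]) ! M) M @ concat (map (\<lambda>k. replicate ((n @ [c]) ! k) k) (rev [0..<M]))"
    using assms by (simp add: partition_of_def)
  also have "\<dots> = replicate c M @ partition_of n"
    unfolding m c using assms by (simp add: partition_of_def)
  finally show ?thesis .
qed

lemma partition_of_lt: "e \<in> set (partition_of n) \<Longrightarrow> e < length n"
  by (auto simp: partition_of_def)

lemma conf_rep:
  assumes "\<forall>e\<in>set mu. e < M"
  shows "conf (Suc M) (replicate k M @ mu) = conf M mu @ [k]"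
proof -
  have "count_list mu M = 0" using assms by (induction mu) auto
  moreover have "\<And>j. j < M \<Longrightarrow> count_list (replicate k M) j = 0" by (induction k) auto
  moreover have "count_list (replicate k M) M = k" by (induction k) auto
  ultimately show ?thesis by (auto simp: conf_def count_list_append)
qed

lemma Sset_snoc:
  assumes "length n = M"
  shows "(\<Sum>m\<in>Sset (Suc M) (n @ [c]). F m) = (\<Sum>y\<in>{..c+1}. \<Sum>m\<in>Sset M n. F (m @ [y]))"
proof -
  have eq: "Sset (Suc M) (n @ [c]) = (\<lambda>(y, m). m @ [y]) ` ({..c+1} \<times> Sset M n)"
  proof (intro equalityI subsetI)
    fix m assume m: "m \<in> Sset (Suc M) (n @ [c])"
    then have lm: "length m = Suc M" using assms by (simp add: Sset_len)
    then obtain m0 y where my: "m = m0 @ [y]" by (cases m rule: rev_cases) auto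
    have "y \<le> c + 1" using m my lm assms by (auto simp: Sset_len nth_append dest: spec[of _ M])
    moreover have "m0 \<in> Sset M n"
    proof -
      have "\<forall>j<M. m0 ! j \<le> n ! j + 1"
      proof (intro allI impI)
        fix j assume "j < M"
        then show "m0 ! j \<le> n ! j + 1" using m my lm assms
          by (auto simp: Sset_len nth_append dest!: spec[of _ j])
      qed
      then show ?thesis using lm my assms by (simp add: Sset_len)
    qed
    ultimately show "m \<in> (\<lambda>(y, m). m @ [y]) ` ({..c+1} \<times> Sset M n)" using my by auto
  next
    fix m assume "m \<in> (\<lambda>(y, m). m @ [y]) ` ({..c+1} \<times> Sset M n)"
    then obtain y m0 where "m = m0 @ [y]" "y \<le> c + 1" "m0 \<in> Sset M n" by auto
    then show "m \<in> Sset (Suc M) (n @ [c])" using assms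
      by (auto simp: Sset_len nth_append less_Suc_eq)
  qed
  have inj: "inj_on (\<lambda>(y, m). m @ [y]) ({..c+1} \<times> Sset M n)" by (auto simp: inj_on_def)
  have "(\<Sum>m\<in>Sset (Suc M) (n @ [c]). F m) = sum (F \<circ> (\<lambda>(y, m). m @ [y])) ({..c+1} \<times> Sset M n)"
    unfolding eq by (rule sum.reindex[OF inj])
  also have "\<dots> = (\<Sum>(y, m)\<in>{..c+1} \<times> Sset M n. F (m @ [y]))"
    by (rule sum.cong) auto
  also have "\<dots> = (\<Sum>y\<in>{..c+1}. \<Sum>m\<in>Sset M n. F (m @ [y]))"
    by (rule sum.cartesian_product[symmetric])
  finally show ?thesis .
qed

lemma Pth_snoc:
  assumes "length n = M" "length m = M"
  shows "Pth \<beta> v (Suc M) a b (n @ [c]) (m @ [y]) = (\<Sum>d<2. loc \<beta> v a d c y * Pth \<beta> v M d b n m)"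
proof -
  have "Pth \<beta> v M d b (n @ [c]) (m @ [y]) = Pth \<beta> v M d b n m" for d
    by (rule Pth_cong) (use assms in \<open>auto simp: nth_append\<close>)
  then show ?thesis using assms by (simp add: nth_append)
qed

lemma loc00: "(\<Sum>y\<in>{..c+1}. loc \<beta> v 0 0 c y * F y) = (inverse v - (if c = 0 then \<beta> * v else 0)) * F c"
  by (subst sum_single[of _ c]) (auto simp: loc_def)

lemma loc01: "(\<Sum>y\<in>{..c+1}. loc \<beta> v 0 1 c y * F y) = (if c = 0 then 0 else F (c - 1))"
proof (cases c)
  case 0 then show ?thesis by (auto simp: loc_def intro!: sum.neutral)
next
  case (Suc c') then show ?thesis by (subst sum_single[of _ c']) (auto simp: loc_def)
qed

lemma loc10: "(\<Sum>y\<in>{..c+1}. loc \<beta> v 1 0 c y * F y) = F (c + 1)"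
  by (subst sum_single[of _ "c+1"]) (auto simp: loc_def)

lemma loc11: "(\<Sum>y\<in>{..c+1}. loc \<beta> v 1 1 c y * F y) = v * F c"
  by (subst sum_single[of _ c]) (auto simp: loc_def)

lemma bx_sorted: "mu \<in> bx h r \<Longrightarrow> sorted_wrt (\<ge>) mu"
proof (induction r arbitrary: h mu)
  case Nil then show ?case by simp
next
  case (Cons a r)
  then obtain y mu' where y: "mu = y # mu'" "a \<le> y" "mu' \<in> bx a r" by auto
  have "\<forall>e\<in>set mu'. e \<le> y" using bx_le[OF y(3)] y(2) by fastforce
  then show ?case using Cons.IH[OF y(3)] y by simp
qed

lemma SB_cong:
  "(\<And>mu. mu \<in> bx (hd lam) (tl lam) \<Longrightarrow> g mu = g' mu) \<Longrightarrow> SB \<beta> M x lam g = SB \<beta> M x lam g'"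
  by (cases lam) (auto simp: SB_def intro!: sum.cong)

lemma SD_cong:
  "(\<And>mu. mu \<in> bx (M - 1) lam \<Longrightarrow> g mu = g' mu) \<Longrightarrow> SD \<beta> M x lam g = SD \<beta> M x lam g'"
  by (auto simp: SD_def intro!: sum.cong)

lemma SB_lt: "\<forall>e\<in>set lam. e < M \<Longrightarrow> mu \<in> bx (hd lam) (tl lam) \<Longrightarrow> \<forall>e\<in>set mu. e < M"
  by (cases lam) (auto dest: bx_le)

lemma SD_lt: "M \<ge> 1 \<Longrightarrow> mu \<in> bx (M - 1) lam \<Longrightarrow> \<forall>e\<in>set mu. e < M"
  by (auto dest: bx_le)

lemma bx_rep0: "bx 0 (replicate c 0) = {replicate c 0}"
  using bx_rep[of 0 c "[]"] by simp

lemma Row: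
  assumes "M \<ge> 1" "length n = M" "v \<noteq> 0"
  shows "v ^ M * (\<Sum>m\<in>Sset M n. Pth \<beta> v M 0 1 n m * \<psi> m) = v * SB \<beta> M (v^2) (partition_of n) (\<lambda>mu. \<psi> (conf M mu))
       \<and> v ^ M * (\<Sum>m\<in>Sset M n. Pth \<beta> v M 1 1 n m * \<psi> m) = SD \<beta> M (v^2) (partition_of n) (\<lambda>mu. \<psi> (conf M mu))"
  using assms(1,2)
proof (induction M arbitrary: n \<psi> rule: nat_induct_at_least)
  case base
  then obtain c where n: "n = [] @ [c]" by (cases n) auto
  have p: "partition_of n = replicate c 0" using partition_of_snoc[of "[]" 0 c] n by (simp add: partition_of_def)
  have S: "(\<Sum>m\<in>Sset 1 n. F m) = (\<Sum>y\<in>{..c+1}. F [y])" for F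
    using Sset_snoc[where n="[]" and M=0 and c=c and F=F] n by (simp add: Sset_len)
  have c1: "conf 1 (replicate k 0) = [k]" for k
  proof -
    have "count_list (replicate k 0) (0::nat) = k" by (induction k) auto
    then show ?thesis by (simp add: conf_def)
  qed
  have LB: "(\<Sum>m\<in>Sset 1 n. Pth \<beta> v 1 0 1 n m * \<psi> m) = (\<Sum>y\<in>{..c+1}. loc \<beta> v 0 1 c y * \<psi> [y])"
    using S[of "\<lambda>m. Pth \<beta> v 1 0 1 n m * \<psi> m"] n by (simp add: sum2)
  have LD: "(\<Sum>m\<in>Sset 1 n. Pth \<beta> v 1 1 1 n m * \<psi> m) = (\<Sum>y\<in>{..c+1}. loc \<beta> v 1 1 c y * \<psi> [y])"
    using S[of "\<lambda>m. Pth \<beta> v 1 1 1 n m * \<psi> m"] n by (simp add: sum2)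
  have B: "v ^ 1 * (\<Sum>m\<in>Sset 1 n. Pth \<beta> v 1 0 1 n m * \<psi> m) = v * SB \<beta> 1 (v^2) (partition_of n) (\<lambda>mu. \<psi> (conf 1 mu))"
  proof (cases c)
    case 0
    have "(\<Sum>y\<in>{..c+1}. loc \<beta> v 0 1 c y * \<psi> [y]) = 0" using loc01[where c=c and F="\<lambda>y. \<psi> [y]" and \<beta>=\<beta> and v=v] 0 by simp
    then show ?thesis using 0 unfolding LB by (simp add: SB_def p)
  next
    case (Suc c')
    have "(\<Sum>y\<in>{..c+1}. loc \<beta> v 0 1 c y * \<psi> [y]) = \<psi> [c']" using loc01[where c=c and F="\<lambda>y. \<psi> [y]" and \<beta>=\<beta> and v=v] Suc by simp
    moreover have "SB \<beta> 1 (v^2) (partition_of n) (\<lambda>mu. \<psi> (conf 1 mu)) = \<psi> [c']"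
      using Suc by (simp add: p SB_def bx_rep0 c1 c1[simplified] wt_rep[of _ _ 0 c' "[]" "[]", simplified] lastv_rep[of 0 c' "[]", simplified])
    ultimately show ?thesis unfolding LB by simp
  qed
  have D: "v ^ 1 * (\<Sum>m\<in>Sset 1 n. Pth \<beta> v 1 1 1 n m * \<psi> m) = SD \<beta> 1 (v^2) (partition_of n) (\<lambda>mu. \<psi> (conf 1 mu))"
  proof -
    have "(\<Sum>y\<in>{..c+1}. loc \<beta> v 1 1 c y * \<psi> [y]) = v * \<psi> [c]" by (rule loc11)
    moreover have "SD \<beta> 1 (v^2) (partition_of n) (\<lambda>mu. \<psi> (conf 1 mu)) = v^2 * \<psi> [c]"
      by (simp add: p SD_def bx_rep0 c1 c1[simplified] wt_rep[of _ _ 0 c "[]" "[]", simplified] lastv_rep[of 0 c "[]", simplified])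
    ultimately show ?thesis unfolding LD by (simp add: power2_eq_square)
  qed
  show ?case using B D by simp
next
  case (Suc M)
  obtain n' c where n: "n = n' @ [c]" using Suc.prems by (cases n rule: rev_cases) auto
  have ln': "length n' = M" using n Suc.prems by simp
  let ?lam = "partition_of n'"
  have lt: "\<forall>e\<in>set ?lam. e < M" using partition_of_lt ln' by blast
  have p: "partition_of n = replicate c M @ ?lam" using partition_of_snoc[OF ln'] n by simp
  define X where "X d y = (\<Sum>m\<in>Sset M n'. Pth \<beta> v M d 1 n' m * \<psi> (m @ [y]))" for d y
  have gen: "(\<Sum>m\<in>Sset (Suc M) n. Pth \<beta> v (Suc M) a 1 n m * \<psi> m) =
     (\<Sum>y\<in>{..c+1}. loc \<beta> v a 0 c y * X 0 y) + (\<Sum>y\<in>{..c+1}. loc \<beta> v a 1 c y * X 1 y)" for a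
  proof -
    have "(\<Sum>m\<in>Sset (Suc M) n. Pth \<beta> v (Suc M) a 1 n m * \<psi> m) =
       (\<Sum>y\<in>{..c+1}. \<Sum>m\<in>Sset M n'. Pth \<beta> v (Suc M) a 1 (n' @ [c]) (m @ [y]) * \<psi> (m @ [y]))"
      unfolding n by (rule Sset_snoc[OF ln'])
    also have "\<dots> = (\<Sum>y\<in>{..c+1}. \<Sum>m\<in>Sset M n'. (loc \<beta> v a 0 c y * Pth \<beta> v M 0 1 n' m
          + loc \<beta> v a 1 c y * Pth \<beta> v M 1 1 n' m) * \<psi> (m @ [y]))"
    proof (intro sum.cong refl)
      fix y m assume "m \<in> Sset M n'"
      then have "length m = M" using ln' by (simp add: Sset_len)
      then have "Pth \<beta> v (Suc M) a 1 (n' @ [c]) (m @ [y]) = (\<Sum>d<2. loc \<beta> v a d c y * Pth \<beta> v M d 1 n' m)"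
        using Pth_snoc[OF ln'] by blast
      then show "Pth \<beta> v (Suc M) a 1 (n' @ [c]) (m @ [y]) * \<psi> (m @ [y]) =
         (loc \<beta> v a 0 c y * Pth \<beta> v M 0 1 n' m + loc \<beta> v a 1 c y * Pth \<beta> v M 1 1 n' m) * \<psi> (m @ [y])"
        by (simp only: sum2)
    qed
    also have "\<dots> = (\<Sum>y\<in>{..c+1}. loc \<beta> v a 0 c y * X 0 y) + (\<Sum>y\<in>{..c+1}. loc \<beta> v a 1 c y * X 1 y)"
      by (simp add: X_def sum.distrib sum_distrib_left distrib_right mult.assoc)
    finally show ?thesis .
  qed
  have IHB: "v ^ M * X 0 y = v * SB \<beta> M (v^2) ?lam (\<lambda>mu. \<psi> (conf M mu @ [y]))" for y
    using Suc.IH[OF ln', of "\<lambda>m. \<psi> (m @ [y])"] by (simp add: X_def)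
  have IHD: "v ^ M * X 1 y = SD \<beta> M (v^2) ?lam (\<lambda>mu. \<psi> (conf M mu @ [y]))" for y
    using Suc.IH[OF ln', of "\<lambda>m. \<psi> (m @ [y])"] by (simp add: X_def)
  have conf_g: "\<psi> (conf (Suc M) (replicate k M @ mu)) = \<psi> (conf M mu @ [k])" if "\<forall>e\<in>set mu. e < M" for k mu
    using conf_rep[OF that] by simp
  have B: "v ^ Suc M * (\<Sum>m\<in>Sset (Suc M) n. Pth \<beta> v (Suc M) 0 1 n m * \<psi> m) =
      v * SB \<beta> (Suc M) (v^2) (partition_of n) (\<lambda>mu. \<psi> (conf (Suc M) mu))"
  proof (cases c)
    case 0
    have "v ^ Suc M * (\<Sum>m\<in>Sset (Suc M) n. Pth \<beta> v (Suc M) 0 1 n m * \<psi> m)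
        = (1 - \<beta> * v^2) * (v ^ M * X 0 0)"
      unfolding gen loc00 loc01 using 0 Suc.prems assms(3) by (simp add: field_simps power2_eq_square)
    also have "\<dots> = (1 - \<beta> * v^2) * (v * SB \<beta> M (v^2) ?lam (\<lambda>mu. \<psi> (conf (Suc M) mu)))"
      unfolding IHB using conf_g[of _ 0] SB_lt[OF lt] by (auto intro!: SB_cong)
    also have "\<dots> = v * SB \<beta> (Suc M) (v^2) (partition_of n) (\<lambda>mu. \<psi> (conf (Suc M) mu))"
      using C0[OF lt] 0 p by simp
    finally show ?thesis .
  next
    case (Suc c')
    have "v ^ Suc M * (\<Sum>m\<in>Sset (Suc M) n. Pth \<beta> v (Suc M) 0 1 n m * \<psi> m)
        = v ^ M * X 0 c + v * (v ^ M * X 1 c')"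
      unfolding gen loc00 loc01 using Suc assms(3) by (simp add: field_simps)
    also have "\<dots> = v * SB \<beta> M (v^2) ?lam (\<lambda>mu. \<psi> (conf (Suc M) (replicate c M @ mu)))
          + v * SD \<beta> M (v^2) ?lam (\<lambda>mu. \<psi> (conf (Suc M) (replicate c' M @ mu)))"
      unfolding IHB IHD using conf_g SB_lt[OF lt] SD_lt[OF \<open>M \<ge> 1\<close>]
      by (auto intro!: SB_cong SD_cong arg_cong2[where f="(+)"])
    also have "\<dots> = v * SB \<beta> (Suc M) (v^2) (partition_of n) (\<lambda>mu. \<psi> (conf (Suc M) mu))"
      using C1[OF \<open>M \<ge> 1\<close> lt] Suc p by (simp add: distrib_left)
    finally show ?thesis .
  qed
  have D: "v ^ Suc M * (\<Sum>m\<in>Sset (Suc M) n. Pth \<beta> v (Suc M) 1 1 n m * \<psi> m) =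
      SD \<beta> (Suc M) (v^2) (partition_of n) (\<lambda>mu. \<psi> (conf (Suc M) mu))"
  proof -
    have "v ^ Suc M * (\<Sum>m\<in>Sset (Suc M) n. Pth \<beta> v (Suc M) 1 1 n m * \<psi> m)
        = v * (v ^ M * X 0 (c + 1)) + v * v * (v ^ M * X 1 c)"
      unfolding gen loc10 loc11 by (simp add: field_simps)
    also have "\<dots> = v^2 * SB \<beta> M (v^2) ?lam (\<lambda>mu. \<psi> (conf (Suc M) (replicate (Suc c) M @ mu)))
          + v^2 * SD \<beta> M (v^2) ?lam (\<lambda>mu. \<psi> (conf (Suc M) (replicate c M @ mu)))"
    proof -
      have "SB \<beta> M (v^2) ?lam (\<lambda>mu. \<psi> (conf M mu @ [c+1])) = SB \<beta> M (v^2) ?lam (\<lambda>mu. \<psi> (conf (Suc M) (replicate (Suc c) M @ mu)))"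
        using conf_g[where k="Suc c"] SB_lt[OF lt] by (auto intro!: SB_cong simp del: replicate_Suc)
      moreover have "SD \<beta> M (v^2) ?lam (\<lambda>mu. \<psi> (conf M mu @ [c])) = SD \<beta> M (v^2) ?lam (\<lambda>mu. \<psi> (conf (Suc M) (replicate c M @ mu)))"
        using conf_g SD_lt[OF \<open>M \<ge> 1\<close>] by (auto intro!: SD_cong)
      ultimately show ?thesis unfolding IHB IHD by (simp add: power2_eq_square)
    qed
    also have "\<dots> = SD \<beta> (Suc M) (v^2) (partition_of n) (\<lambda>mu. \<psi> (conf (Suc M) mu))"
      using C2[OF \<open>M \<ge> 1\<close> lt] p by simp
    finally show ?thesis .
  qed
  show ?case using B D by simp
qed




fun AA :: "complex \<Rightarrow> nat \<Rightarrow> nat \<Rightarrow> (nat \<Rightarrow> complex) \<Rightarrow> nat list \<Rightarrow> complex" where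
  "AA \<beta> M 0 u lam = (if lam = [] then 1 else 0)"
| "AA \<beta> M (Suc N) u lam = SB \<beta> M (u 0) lam (\<lambda>mu. AA \<beta> M N (u \<circ> Suc) mu)"

lemma sorted_split:
  assumes "sorted_wrt (\<ge>) mu" "\<forall>e\<in>set mu. e < Suc M"
  shows "\<exists>k mu'. mu = replicate k M @ mu' \<and> sorted_wrt (\<ge>) mu' \<and> (\<forall>e\<in>set mu'. e < M)"
  using assms
proof (induction mu)
  case Nil then show ?case by (intro exI[of _ 0] exI[of _ "[]"]) simp
next
  case (Cons a r)
  show ?case
  proof (cases "a = M")
    case True
    from Cons obtain k mu' where "r = replicate k M @ mu'" "sorted_wrt (\<ge>) mu'" "\<forall>e\<in>set mu'. e < M" by auto
    then show ?thesis using True by (intro exI[of _ "Suc k"] exI[of _ mu']) simp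
  next
    case False
    then have "a < M" using Cons.prems by auto
    then have "\<forall>e\<in>set (a # r). e < M" using Cons.prems by auto
    then show ?thesis using Cons.prems by (intro exI[of _ 0] exI[of _ "a # r"]) simp
  qed
qed

lemma length_conf[simp]: "length (conf M mu) = M" by (simp add: conf_def)

lemma partition_of_conf:
  "sorted_wrt (\<ge>) mu \<Longrightarrow> \<forall>e\<in>set mu. e < M \<Longrightarrow> partition_of (conf M mu) = mu"
proof (induction M arbitrary: mu)
  case 0 then show ?case by (cases mu) (auto simp: conf_def partition_of_def)
next
  case (Suc M)
  obtain k mu' where mu: "mu = replicate k M @ mu'" "sorted_wrt (\<ge>) mu'" "\<forall>e\<in>set mu'. e < M"
    using sorted_split[OF Suc.prems] by blast
  have "partition_of (conf (Suc M) mu) = partition_of (conf M mu' @ [k])"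
    using conf_rep[OF mu(3)] mu(1) by simp
  also have "\<dots> = replicate k M @ partition_of (conf M mu')"
    by (rule partition_of_snoc) simp
  also have "\<dots> = mu" using Suc.IH[OF mu(2,3)] mu(1) by simp
  finally show ?case .
qed

lemma partition_of_nil: "length n = M \<Longrightarrow> partition_of n = [] \<longleftrightarrow> n = replicate M 0"
proof
  assume l: "length n = M" and p: "partition_of n = []"
  have "\<forall>k<M. n ! k = 0"
  proof (intro allI impI)
    fix k assume "k < M"
    then have "k \<in> set (rev [0..<M])" by simp
    then show "n ! k = 0" using p l by (auto simp: partition_of_def)
  qed
  then show "n = replicate M 0" using l by (intro nth_equalityI) auto
next
  assume "length n = M" "n = replicate M 0"
  then show "partition_of n = []" by (auto simp: partition_of_def)
qed

lemma SB_scale: "SB \<beta> M x lam (\<lambda>mu. c * g mu) = c * SB \<beta> M x lam g"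
  by (cases lam) (auto simp: SB_def sum_distrib_left algebra_simps)

lemma bx_props: "mu \<in> bx (hd lam) (tl lam) \<Longrightarrow> \<forall>e\<in>set lam. e < M \<Longrightarrow> lam \<noteq> [] \<Longrightarrow>
   sorted_wrt (\<ge>) mu \<and> (\<forall>e\<in>set mu. e < M)"
  using bx_sorted SB_lt by blast

lemma ket_formula:
  assumes "M \<ge> 1" "\<forall>j<N. v j \<noteq> 0" "length n = M"
  shows "amp_ket \<beta> M N v n * (\<Prod>j<N. v j ^ M) = (\<Prod>j<N. v j) * AA \<beta> M N (\<lambda>j. (v j)^2) (partition_of n)"
  using assms(2,3)
proof (induction N arbitrary: v n)
  case 0
  then show ?case by (simp add: amp_ket_def Psi_ket_def vacuum_def ket_def partition_of_nil)
next
  case (Suc N)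
  let ?P = "\<Prod>j<N. v (Suc j) ^ M"
  let ?Q = "\<Prod>j<N. v (Suc j)"
  let ?lam = "partition_of n"
  have v0: "v 0 \<noteq> 0" using Suc.prems by auto
  have IH: "amp_ket \<beta> M N (v \<circ> Suc) m * ?P = ?Q * AA \<beta> M N (\<lambda>j. (v (Suc j))^2) (partition_of m)"
    if "length m = M" for m
    using Suc.IH[of "v \<circ> Suc" m] Suc.prems that by (simp add: comp_def)
  have lt: "\<forall>e\<in>set ?lam. e < M" using partition_of_lt Suc.prems by blast
  have "amp_ket \<beta> M (Suc N) v n * (\<Prod>j<Suc N. v j ^ M)
      = v 0 ^ M * (\<Sum>m\<in>Sset M n. Pth \<beta> (v 0) M 0 1 n m * (amp_ket \<beta> M N (v \<circ> Suc) m * ?P))"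
    by (simp del: prod.lessThan_Suc add: amp_ket_Suc[OF Suc.prems(2)] prod.lessThan_Suc_shift sum_distrib_left sum_distrib_right mult_ac)
  also have "\<dots> = v 0 * SB \<beta> M ((v 0)^2) ?lam (\<lambda>mu. amp_ket \<beta> M N (v \<circ> Suc) (conf M mu) * ?P)"
    using Row[OF assms(1) Suc.prems(2) v0, of \<beta> "\<lambda>m. amp_ket \<beta> M N (v \<circ> Suc) m * ?P"] by simp
  also have "\<dots> = v 0 * SB \<beta> M ((v 0)^2) ?lam (\<lambda>mu. ?Q * AA \<beta> M N (\<lambda>j. (v (Suc j))^2) mu)"
  proof -
    have "SB \<beta> M ((v 0)^2) ?lam (\<lambda>mu. amp_ket \<beta> M N (v \<circ> Suc) (conf M mu) * ?P) =
          SB \<beta> M ((v 0)^2) ?lam (\<lambda>mu. ?Q * AA \<beta> M N (\<lambda>j. (v (Suc j))^2) mu)"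
    proof (cases "?lam = []")
      case True then show ?thesis by (simp add: SB_def)
    next
      case False
      show ?thesis
      proof (rule SB_cong)
        fix mu assume mu: "mu \<in> bx (hd ?lam) (tl ?lam)"
        then have "sorted_wrt (\<ge>) mu \<and> (\<forall>e\<in>set mu. e < M)" using bx_props lt False by blast
        then show "amp_ket \<beta> M N (v \<circ> Suc) (conf M mu) * ?P = ?Q * AA \<beta> M N (\<lambda>j. (v (Suc j))^2) mu"
          using IH[of "conf M mu"] partition_of_conf by simp
      qed
    qed
    then show ?thesis by simp
  qed
  also have "\<dots> = (\<Prod>j<Suc N. v j) * AA \<beta> M (Suc N) (\<lambda>j. (v j)^2) ?lam"
    by (simp del: prod.lessThan_Suc add: SB_scale prod.lessThan_Suc_shift o_def)
  finally show ?case .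
qed

lemma bra_formula:
  assumes "M \<ge> 1" "\<forall>j<N. v j \<noteq> 0" "length n = M"
  shows "amp_bra \<beta> M N v n * (\<Prod>j<N. v j ^ M) = (\<Prod>j<N. v j) * AA \<beta> M N (\<lambda>j. (v (N - 1 - j))^2) (partition_of (rev n))"
  using assms(2,3)
proof (induction N arbitrary: n)
  case 0
  have "rev n = replicate M 0 \<longleftrightarrow> n = replicate M 0" by (metis rev_replicate rev_rev_ident)
  then show ?case using 0 by (simp add: amp_bra_def ket_def partition_of_nil)
next
  case (Suc N)
  let ?P = "\<Prod>j<N. v j ^ M"
  let ?Q = "\<Prod>j<N. v j"
  let ?u = "\<lambda>j. (v (N - 1 - j))^2"
  let ?lam = "partition_of (rev n)"
  have vN: "v N \<noteq> 0" using Suc.prems by auto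
  have IH: "amp_bra \<beta> M N v m * ?P = ?Q * AA \<beta> M N ?u (partition_of (rev m))"
    if "length m = M" for m
    using Suc.IH[of m] Suc.prems that by simp
  have lt: "\<forall>e\<in>set ?lam. e < M" using partition_of_lt Suc.prems by fastforce
  have lr: "length (rev n) = M" using Suc.prems by simp
  have "amp_bra \<beta> M (Suc N) v n * (\<Prod>j<Suc N. v j ^ M)
      = v N ^ M * (\<Sum>m\<in>Sset M (rev n). Pth \<beta> (v N) M 0 1 (rev n) m * (amp_bra \<beta> M N v (rev m) * ?P))"
    by (simp add: amp_bra_Suc[OF Suc.prems(2)] sum_distrib_left sum_distrib_right mult_ac)
  also have "\<dots> = v N * SB \<beta> M ((v N)^2) ?lam (\<lambda>mu. amp_bra \<beta> M N v (rev (conf M mu)) * ?P)"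
    using Row[OF assms(1) lr vN, of \<beta> "\<lambda>m. amp_bra \<beta> M N v (rev m) * ?P"] by simp
  also have "\<dots> = v N * SB \<beta> M ((v N)^2) ?lam (\<lambda>mu. ?Q * AA \<beta> M N ?u mu)"
  proof -
    have "SB \<beta> M ((v N)^2) ?lam (\<lambda>mu. amp_bra \<beta> M N v (rev (conf M mu)) * ?P) =
          SB \<beta> M ((v N)^2) ?lam (\<lambda>mu. ?Q * AA \<beta> M N ?u mu)"
    proof (cases "?lam = []")
      case True then show ?thesis by (simp add: SB_def)
    next
      case False
      show ?thesis
      proof (rule SB_cong)
        fix mu assume mu: "mu \<in> bx (hd ?lam) (tl ?lam)"
        then have "sorted_wrt (\<ge>) mu \<and> (\<forall>e\<in>set mu. e < M)" using bx_props lt False by blast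
        then show "amp_bra \<beta> M N v (rev (conf M mu)) * ?P = ?Q * AA \<beta> M N ?u mu"
          using IH[of "rev (conf M mu)"] partition_of_conf by simp
      qed
    qed
    then show ?thesis by simp
  qed
  also have "\<dots> = (\<Prod>j<Suc N. v j) * AA \<beta> M (Suc N) (\<lambda>j. (v (Suc N - 1 - j))^2) ?lam"
  proof -
    have "(\<lambda>j. (v (Suc N - 1 - j))^2) \<circ> Suc = ?u" by (rule ext) (simp add: diff_diff_left)
    then show ?thesis by (simp add: SB_scale algebra_simps)
  qed
  finally show ?case .
qed




definition lset :: "nat \<Rightarrow> (nat \<Rightarrow> nat set) \<Rightarrow> nat list set" where
  "lset n T = {mu. length mu = n \<and> (\<forall>k<n. mu!k \<in> T k)}"

lemma lset_Suc: "lset (Suc n) T = (\<lambda>(mu, t). mu @ [t]) ` (lset n T \<times> T n)"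
proof (intro equalityI subsetI)
  fix mu assume mu: "mu \<in> lset (Suc n) T"
  then obtain mu0 t where e: "mu = mu0 @ [t]" by (cases mu rule: rev_cases) (auto simp: lset_def)
  have "mu0 \<in> lset n T"
  proof -
    have "\<forall>k<n. mu0 ! k \<in> T k"
    proof (intro allI impI)
      fix k assume k: "k < n"
      then have "mu ! k \<in> T k" using mu by (auto simp: lset_def)
      then show "mu0 ! k \<in> T k" using k mu e by (auto simp: lset_def nth_append)
    qed
    then show ?thesis using mu e by (auto simp: lset_def)
  qed
  moreover have "t \<in> T n" using mu e by (auto simp: lset_def dest!: spec[of _ n])
  ultimately show "mu \<in> (\<lambda>(mu, t). mu @ [t]) ` (lset n T \<times> T n)" using e by auto
next
  fix mu assume "mu \<in> (\<lambda>(mu, t). mu @ [t]) ` (lset n T \<times> T n)"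
  then show "mu \<in> lset (Suc n) T" by (auto simp: lset_def nth_append less_Suc_eq)
qed

lemma lset_finite: "(\<And>k. k < n \<Longrightarrow> finite (T k)) \<Longrightarrow> finite (lset n T)"
proof (induction n)
  case 0
  have "lset 0 T = {[]}" by (auto simp: lset_def)
  then show ?case by simp
next
  case (Suc n)
  then show ?case unfolding lset_Suc by auto
qed

lemma prod_sum_lset:
  fixes F :: "nat \<Rightarrow> nat \<Rightarrow> complex"
  assumes "\<And>k. k < n \<Longrightarrow> finite (T k)"
  shows "(\<Prod>k<n. \<Sum>t\<in>T k. F k t) = (\<Sum>mu\<in>lset n T. \<Prod>k<n. F k (mu!k))"
  using assms
proof (induction n)
  case 0
  have "lset 0 T = {[]}" by (auto simp: lset_def)
  then show ?case by simp
next
  case (Suc n)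
  have inj: "inj_on (\<lambda>(mu, t). mu @ [t]) (lset n T \<times> T n)" by (auto simp: inj_on_def)
  have "(\<Sum>mu\<in>lset (Suc n) T. \<Prod>k<Suc n. F k (mu!k)) =
      sum ((\<lambda>mu. \<Prod>k<Suc n. F k (mu!k)) \<circ> (\<lambda>(mu, t). mu @ [t])) (lset n T \<times> T n)"
    unfolding lset_Suc by (rule sum.reindex[OF inj])
  also have "\<dots> = (\<Sum>(mu, t)\<in>lset n T \<times> T n. (\<Prod>k<n. F k (mu!k)) * F n t)"
  proof (rule sum.cong)
    fix p assume p: "p \<in> lset n T \<times> T n"
    obtain mu t where pe: "p = (mu, t)" by (cases p)
    have l: "length mu = n" using p pe by (auto simp: lset_def)
    have "(\<Prod>k<n. F k ((mu @ [t]) ! k)) = (\<Prod>k<n. F k (mu!k))"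
      using l by (intro prod.cong) (auto simp: nth_append)
    then show "((\<lambda>mu. \<Prod>k<Suc n. F k (mu!k)) \<circ> (\<lambda>(mu, t). mu @ [t])) p = (case p of (mu, t) \<Rightarrow> (\<Prod>k<n. F k (mu!k)) * F n t)"
      using l pe by (simp add: nth_append)
  qed simp
  also have "\<dots> = (\<Sum>mu\<in>lset n T. \<Sum>t\<in>T n. (\<Prod>k<n. F k (mu!k)) * F n t)"
    by (rule sum.cartesian_product[symmetric])
  also have "\<dots> = (\<Sum>mu\<in>lset n T. \<Prod>k<n. F k (mu!k)) * (\<Sum>t\<in>T n. F n t)"
    by (rule sum_product[symmetric])
  also have "\<dots> = (\<Prod>k<Suc n. \<Sum>t\<in>T k. F k t)"
    using Suc by simp
  finally show ?case by simp
qed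

lemma det_mat_cols:
  "det (mat n n f) = (\<Sum>p\<in>{p. p permutes {0..<n}}. signof p * (\<Prod>k<n. f (p k, k)))"
proof -
  have c: "transpose_mat (mat n n f) \<in> carrier_mat n n" by simp
  have "det (mat n n f) = det (transpose_mat (mat n n f))"
    using det_transpose[of "mat n n f" n] by simp
  also have "\<dots> = (\<Sum>p\<in>{p. p permutes {0..<n}}. signof p * (\<Prod>k=0..<n. transpose_mat (mat n n f) $$ (k, p k)))"
    by (rule det_def'[OF c])
  also have "\<dots> = (\<Sum>p\<in>{p. p permutes {0..<n}}. signof p * (\<Prod>k<n. f (p k, k)))"
  proof (intro sum.cong refl)
    fix p assume "p \<in> {p. p permutes {0..<n}}"
    then have "\<And>k. k < n \<Longrightarrow> p k < n" by (auto dest: permutes_in_image)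
    then show "signof p * (\<Prod>k=0..<n. transpose_mat (mat n n f) $$ (k, p k)) = signof p * (\<Prod>k<n. f (p k, k))"
      by (auto simp: atLeast0LessThan intro!: prod.cong)
  qed
  finally show ?thesis .
qed

lemma det_multilinear_cols:
  fixes w :: "nat \<Rightarrow> nat \<Rightarrow> complex" and g :: "nat \<Rightarrow> nat \<Rightarrow> nat \<Rightarrow> complex"
  assumes "\<And>k. k < n \<Longrightarrow> finite (T k)"
  shows "det (mat n n (\<lambda>(i, k). \<Sum>t\<in>T k. w k t * g k t i)) =
     (\<Sum>mu\<in>lset n T. (\<Prod>k<n. w k (mu!k)) * det (mat n n (\<lambda>(i, k). g k (mu!k) i)))"
proof -
  have "det (mat n n (\<lambda>(i, k). \<Sum>t\<in>T k. w k t * g k t i)) =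
      (\<Sum>p\<in>{p. p permutes {0..<n}}. signof p * (\<Prod>k<n. \<Sum>t\<in>T k. w k t * g k t (p k)))"
    by (simp add: det_mat_cols)
  also have "\<dots> = (\<Sum>p\<in>{p. p permutes {0..<n}}. signof p * (\<Sum>mu\<in>lset n T. \<Prod>k<n. w k (mu!k) * g k (mu!k) (p k)))"
  proof (intro sum.cong refl)
    fix p
    show "signof p * (\<Prod>k<n. \<Sum>t\<in>T k. w k t * g k t (p k)) = signof p * (\<Sum>mu\<in>lset n T. \<Prod>k<n. w k (mu!k) * g k (mu!k) (p k))"
      using prod_sum_lset[of n T "\<lambda>k t. w k t * g k t (p k)"] assms by simp
  qed
  also have "\<dots> = (\<Sum>p\<in>{p. p permutes {0..<n}}. \<Sum>mu\<in>lset n T. (\<Prod>k<n. w k (mu!k)) * (signof p * (\<Prod>k<n. g k (mu!k) (p k))))"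
    by (simp add: sum_distrib_left prod.distrib mult_ac)
  also have "\<dots> = (\<Sum>mu\<in>lset n T. \<Sum>p\<in>{p. p permutes {0..<n}}. (\<Prod>k<n. w k (mu!k)) * (signof p * (\<Prod>k<n. g k (mu!k) (p k))))"
    by (rule sum.swap)
  also have "\<dots> = (\<Sum>mu\<in>lset n T. (\<Prod>k<n. w k (mu!k)) * det (mat n n (\<lambda>(i, k). g k (mu!k) i)))"
    by (simp add: det_mat_cols sum_distrib_left)
  finally show ?thesis .
qed

lemma det_scale:
  fixes r s :: "nat \<Rightarrow> complex" and A :: "nat \<Rightarrow> nat \<Rightarrow> complex"
  shows "det (mat n n (\<lambda>(i, k). r i * s k * A i k)) = (\<Prod>i<n. r i) * (\<Prod>k<n. s k) * det (mat n n (\<lambda>(i, k). A i k))"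
proof -
  have "det (mat n n (\<lambda>(i, k). r i * s k * A i k)) =
     (\<Sum>p\<in>{p. p permutes {0..<n}}. signof p * (\<Prod>k<n. r (p k) * s k * A (p k) k))"
    by (simp add: det_mat_cols)
  also have "\<dots> = (\<Sum>p\<in>{p. p permutes {0..<n}}. (\<Prod>i<n. r i) * (\<Prod>k<n. s k) * (signof p * (\<Prod>k<n. A (p k) k)))"
  proof (intro sum.cong refl)
    fix p assume "p \<in> {p. p permutes {0..<n}}"
    then have pp: "p permutes {..<n}" by (simp add: atLeast0LessThan)
    have "(\<Prod>k<n. r (p k)) = (\<Prod>i<n. r i)" using prod.permute[OF pp, of r] by (simp add: o_def)
    then show "signof p * (\<Prod>k<n. r (p k) * s k * A (p k) k) = (\<Prod>i<n. r i) * (\<Prod>k<n. s k) * (signof p * (\<Prod>k<n. A (p k) k))"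
      by (simp add: prod.distrib mult_ac)
  qed
  also have "\<dots> = (\<Prod>i<n. r i) * (\<Prod>k<n. s k) * det (mat n n (\<lambda>(i, k). A i k))"
    by (simp add: det_mat_cols sum_distrib_left)
  finally show ?thesis .
qed

lemma vandermonde_Suc:
  "vandermonde (Suc n) u = (\<Prod>j<n. u 0 - u (Suc j)) * vandermonde n (u \<circ> Suc)"
proof -
  let ?P = "\<lambda>n. {(j, k). j < k \<and> k < (n::nat)}"
  have eq: "?P (Suc n) = (\<lambda>k. (0, Suc k)) ` {..<n} \<union> (\<lambda>(j, k). (Suc j, Suc k)) ` ?P n"
  proof (intro equalityI subsetI)
    fix p assume "p \<in> ?P (Suc n)"
    then obtain j k where p: "p = (j, k)" "j < k" "k < Suc n" by auto
    then obtain k' where k': "k = Suc k'" by (cases k) auto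
    show "p \<in> (\<lambda>k. (0, Suc k)) ` {..<n} \<union> (\<lambda>(j, k). (Suc j, Suc k)) ` ?P n"
    proof (cases j)
      case 0 then show ?thesis using p k' by auto
    next
      case (Suc j')
      then have "(j', k') \<in> ?P n" using p k' by auto
      then show ?thesis using p k' Suc by force
    qed
  qed auto
  have fin: "finite (?P n)" by (rule finite_subset[of _ "{..<n} \<times> {..<n}"]) auto
  have "vandermonde (Suc n) u = (\<Prod>p\<in>(\<lambda>k. (0, Suc k)) ` {..<n}. case p of (j, k) \<Rightarrow> u j - u k) *
      (\<Prod>p\<in>(\<lambda>(j, k). (Suc j, Suc k)) ` ?P n. case p of (j, k) \<Rightarrow> u j - u k)"
    unfolding vandermonde_def eq by (rule prod.union_disjoint) (use fin in auto)
  also have "\<dots> = (\<Prod>j<n. u 0 - u (Suc j)) * vandermonde n (u \<circ> Suc)"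
  proof -
    have i1: "inj_on (\<lambda>k. (0::nat, Suc k)) {..<n}" by (auto simp: inj_on_def)
    have i2: "inj_on (\<lambda>(j, k). (Suc j, Suc k)) (?P n)" by (auto simp: inj_on_def)
    have a: "(\<Prod>p\<in>(\<lambda>k. (0, Suc k)) ` {..<n}. case p of (j, k) \<Rightarrow> u j - u k) = (\<Prod>j<n. u 0 - u (Suc j))"
      by (subst prod.reindex[OF i1]) simp
    have b: "(\<Prod>p\<in>(\<lambda>(j, k). (Suc j, Suc k)) ` ?P n. case p of (j, k) \<Rightarrow> u j - u k) = vandermonde n (u \<circ> Suc)"
      unfolding vandermonde_def by (subst prod.reindex[OF i2]) (auto intro!: prod.cong)
    show ?thesis using a b by simp
  qed
  finally show ?thesis .
qed




definition cc :: "complex \<Rightarrow> nat \<Rightarrow> nat \<Rightarrow> nat list \<Rightarrow> nat \<Rightarrow> complex \<Rightarrow> complex" where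
  "cc \<beta> M N lam k y = y ^ (lam!k + (N - 1 - k)) * (1 - \<beta> * y) ^ (M - 1 - lam!k)"

definition HH :: "complex \<Rightarrow> nat \<Rightarrow> nat \<Rightarrow> nat list \<Rightarrow> (nat \<Rightarrow> complex) \<Rightarrow> complex" where
  "HH \<beta> M N lam u = det (mat N N (\<lambda>(i, k). cc \<beta> M N lam k (u i)))"

definition SS :: "complex \<Rightarrow> complex \<Rightarrow> complex \<Rightarrow> nat \<Rightarrow> complex" where
  "SS \<beta> x y s = (\<Sum>j\<le>s. x ^ (s - j) * (1 - \<beta> * x) ^ (j - 1) * y ^ j * (1 - \<beta> * y) ^ (s - j))"

lemma SS_Suc: "SS \<beta> x y (Suc s) = x * (1 - \<beta> * y) * SS \<beta> x y s + y ^ Suc s * (1 - \<beta> * x) ^ s"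
proof -
  have "SS \<beta> x y (Suc s) = (\<Sum>j\<le>s. x ^ (Suc s - j) * (1 - \<beta> * x) ^ (j - 1) * y ^ j * (1 - \<beta> * y) ^ (Suc s - j))
      + y ^ Suc s * (1 - \<beta> * x) ^ s"
    by (simp add: SS_def)
  also have "(\<Sum>j\<le>s. x ^ (Suc s - j) * (1 - \<beta> * x) ^ (j - 1) * y ^ j * (1 - \<beta> * y) ^ (Suc s - j))
      = x * (1 - \<beta> * y) * SS \<beta> x y s"
    unfolding SS_def sum_distrib_left
    by (intro sum.cong refl) (simp add: Suc_diff_le algebra_simps)
  finally show ?thesis .
qed

lemma R_id: "y ^ Suc s * (1 - \<beta> * x) ^ s - x ^ Suc s * (1 - \<beta> * y) ^ s = (y - x) * SS \<beta> x y s"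
proof (induction s)
  case 0 then show ?case by (simp add: SS_def)
next
  case (Suc s)
  have "(y - x) * SS \<beta> x y (Suc s) = x * (1 - \<beta> * y) * ((y - x) * SS \<beta> x y s) + (y - x) * y ^ Suc s * (1 - \<beta> * x) ^ s"
    by (simp add: SS_Suc algebra_simps)
  also have "\<dots> = x * (1 - \<beta> * y) * (y ^ Suc s * (1 - \<beta> * x) ^ s - x ^ Suc s * (1 - \<beta> * y) ^ s)
      + (y - x) * y ^ Suc s * (1 - \<beta> * x) ^ s"
    by (simp only: Suc.IH)
  also have "\<dots> = y ^ Suc (Suc s) * (1 - \<beta> * x) ^ Suc s - x ^ Suc (Suc s) * (1 - \<beta> * y) ^ Suc s"
    by (simp add: algebra_simps)
  finally show ?case by simp
qed

lemma colA:
  fixes x y :: complex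
  assumes "q \<le> p" "p < M" "x \<noteq> 0" "1 - \<beta> * x \<noteq> 0"
  shows "y ^ (p + Suc e) * (1 - \<beta> * y) ^ (M - 1 - p)
     - (x ^ (p + Suc e) * (1 - \<beta> * x) ^ (M - 1 - p) / (x ^ (q + e) * (1 - \<beta> * x) ^ (M - 1 - q)))
       * (y ^ (q + e) * (1 - \<beta> * y) ^ (M - 1 - q))
   = (y - x) * (\<Sum>t\<in>{q..p}. x ^ (p - t) * (1 - \<beta> * x) ^ (t - q - 1) * (y ^ (t + e) * (1 - \<beta> * y) ^ (M - 1 - t)))
     / (1 - \<beta> * x) ^ (p - q)"
proof -
  define s where "s = p - q"
  have p: "p = q + s" using assms s_def by simp
  define Y where "Y = y ^ (q + e) * (1 - \<beta> * y) ^ (M - 1 - p)"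
  define bx' where "bx' = (1 - \<beta> * x)"
  have bx0: "bx' \<noteq> 0" using assms bx'_def by simp
  have e1: "M - 1 - q = (M - 1 - p) + s" using assms p by simp
  have lhs: "y ^ (p + Suc e) * (1 - \<beta> * y) ^ (M - 1 - p)
     - (x ^ (p + Suc e) * (1 - \<beta> * x) ^ (M - 1 - p) / (x ^ (q + e) * (1 - \<beta> * x) ^ (M - 1 - q)))
       * (y ^ (q + e) * (1 - \<beta> * y) ^ (M - 1 - q))
     = Y * (y ^ Suc s * bx' ^ s - x ^ Suc s * (1 - \<beta> * y) ^ s) / bx' ^ s"
  proof -
    have xe: "x ^ (p + Suc e) = x ^ (q + e) * x ^ Suc s" unfolding p power_add[symmetric] by (simp add: add_ac)
    have ye: "y ^ (p + Suc e) = y ^ (q + e) * y ^ Suc s" unfolding p power_add[symmetric] by (simp add: add_ac)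
    have b1: "(1 - \<beta> * x) ^ (M - 1 - q) = bx' ^ (M - 1 - p) * bx' ^ s" unfolding e1 bx'_def by (simp add: power_add)
    have b2: "(1 - \<beta> * y) ^ (M - 1 - q) = (1 - \<beta> * y) ^ (M - 1 - p) * (1 - \<beta> * y) ^ s" unfolding e1 by (simp add: power_add)
    show ?thesis unfolding xe ye b1 b2 Y_def using assms bx0
      by (simp add: bx'_def field_simps)
  qed
  have sum: "(\<Sum>t\<in>{q..p}. x ^ (p - t) * (1 - \<beta> * x) ^ (t - q - 1) * (y ^ (t + e) * (1 - \<beta> * y) ^ (M - 1 - t)))
      = Y * SS \<beta> x y s"
  proof -
    have "{q..p} = (\<lambda>j. q + j) ` {..s}"
    proof (intro equalityI subsetI)
      fix t assume "t \<in> {q..p}"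
      then have "t = q + (t - q)" "t - q \<in> {..s}" using p by auto
      then show "t \<in> (\<lambda>j. q + j) ` {..s}" by blast
    qed (use p in auto)
    moreover have "inj_on (\<lambda>j. q + j) {..s}" by (auto simp: inj_on_def)
    ultimately have "(\<Sum>t\<in>{q..p}. x ^ (p - t) * (1 - \<beta> * x) ^ (t - q - 1) * (y ^ (t + e) * (1 - \<beta> * y) ^ (M - 1 - t)))
      = (\<Sum>j\<le>s. x ^ (p - (q + j)) * (1 - \<beta> * x) ^ (q + j - q - 1) * (y ^ (q + j + e) * (1 - \<beta> * y) ^ (M - 1 - (q + j))))"
      by (simp add: sum.reindex)
    also have "\<dots> = (\<Sum>j\<le>s. Y * (x ^ (s - j) * (1 - \<beta> * x) ^ (j - 1) * y ^ j * (1 - \<beta> * y) ^ (s - j)))"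
    proof (intro sum.cong refl)
      fix j assume j: "j \<in> {..s}"
      have a1: "M - 1 - (q + j) = (M - 1 - p) + (s - j)" using j assms p by auto
      have a2: "p - (q + j) = s - j" using p by simp
      have a3: "y ^ (q + j + e) = y ^ (q + e) * y ^ j" by (simp add: power_add[symmetric] add_ac)
      show "x ^ (p - (q + j)) * (1 - \<beta> * x) ^ (q + j - q - 1) * (y ^ (q + j + e) * (1 - \<beta> * y) ^ (M - 1 - (q + j))) =
         Y * (x ^ (s - j) * (1 - \<beta> * x) ^ (j - 1) * y ^ j * (1 - \<beta> * y) ^ (s - j))"
        unfolding a1 a2 a3 Y_def by (simp add: power_add algebra_simps)
    qed
    also have "\<dots> = Y * SS \<beta> x y s" by (simp add: SS_def sum_distrib_left)
    finally show ?thesis .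
  qed
  show ?thesis unfolding lhs sum R_id s_def[symmetric] bx'_def by (simp add: algebra_simps)
qed




lemma lset_Cons: "lset (Suc n) T = (\<lambda>(y, mu). y # mu) ` (T 0 \<times> lset n (\<lambda>k. T (Suc k)))"
proof (intro equalityI subsetI)
  fix mu assume mu: "mu \<in> lset (Suc n) T"
  then obtain y mu' where e: "mu = y # mu'" by (cases mu) (auto simp: lset_def)
  have "y \<in> T 0" using mu e by (auto simp: lset_def)
  moreover have "mu' \<in> lset n (\<lambda>k. T (Suc k))" using mu e by (auto simp: lset_def)
  ultimately show "mu \<in> (\<lambda>(y, mu). y # mu) ` (T 0 \<times> lset n (\<lambda>k. T (Suc k)))" using e by auto
next
  fix mu assume "mu \<in> (\<lambda>(y, mu). y # mu) ` (T 0 \<times> lset n (\<lambda>k. T (Suc k)))"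
  then show "mu \<in> lset (Suc n) T" by (auto simp: lset_def nth_Cons split: nat.splits)
qed

lemma lset_bx: "length r = n \<Longrightarrow> lset n (\<lambda>k. {r!k .. (h#r)!k}) = bx h r"
proof (induction r arbitrary: h n)
  case Nil
  then show ?case by (auto simp: lset_def)
next
  case (Cons b r)
  then obtain n' where n: "n = Suc n'" "length r = n'" by auto
  have "lset n (\<lambda>k. {(b#r)!k .. (h#b#r)!k}) = (\<lambda>(y, mu). y # mu) ` ({b..h} \<times> lset n' (\<lambda>k. {r!k .. (b#r)!k}))"
    unfolding n lset_Cons by simp
  also have "\<dots> = bx h (b # r)" using Cons.IH[OF n(2)] by simp
  finally show ?case .
qed

lemma bx_len: "mu \<in> bx h r \<Longrightarrow> length mu = length r"
  by (induction r arbitrary: h mu) auto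

lemma wt_prod: "length mu = length r \<Longrightarrow>
  wt \<beta> x h r mu = (\<Prod>k<length r. x ^ ((h#r)!k - mu!k) * (1 - \<beta> * x) ^ (mu!k - r!k - 1))"
proof (induction r arbitrary: h mu)
  case Nil then show ?case by (cases mu) auto
next
  case (Cons b r)
  then obtain y mu' where mu: "mu = y # mu'" "length mu' = length r" by (cases mu) auto
  show ?case using Cons.IH[OF mu(2), of b] by (simp add: mu prod.lessThan_Suc_shift del: prod.lessThan_Suc)
qed

lemma lastv_nth: "lastv h r = (h#r) ! length r"
  by (induction r arbitrary: h) auto

lemma telescope:
  fixes lam :: "nat list"
  assumes "sorted_wrt (\<ge>) lam" "length lam = Suc n" "m \<le> n"
  shows "(\<Sum>k<m. lam!k - lam!(Suc k)) = lam!0 - lam!m"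
  using assms(3)
proof (induction m)
  case 0 then show ?case by simp
next
  case (Suc m)
  have a: "lam!m \<ge> lam!(Suc m)" using assms Suc.prems by (intro sorted_wrt_nth_less[OF assms(1)]) auto
  have b: "lam!0 \<ge> lam!m" using assms Suc.prems
    by (cases m) (auto intro: sorted_wrt_nth_less[OF assms(1)])
  show ?case using Suc a b by simp
qed

lemma prod_neg: "(\<Prod>i<n. (f i :: complex) - x) * (-1) ^ n = (\<Prod>i<n. x - f i)"
  by (induction n) (auto simp: algebra_simps)




lemma Branch:
  fixes u :: "nat \<Rightarrow> complex" and lam :: "nat list"
  assumes lam: "lam = a # r" "length r = n" and srt: "sorted_wrt (\<ge>) lam" and lt: "\<forall>e\<in>set lam. e < M"
    and x0: "u 0 \<noteq> 0" and bx0: "1 - \<beta> * u 0 \<noteq> 0"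
  shows "HH \<beta> M (Suc n) lam u = (\<Prod>j<n. u 0 - u (Suc j)) * SB \<beta> M (u 0) lam (\<lambda>mu. HH \<beta> M n mu (u \<circ> Suc))"
proof -
  define x where "x = u 0"
  define c where "c k y = cc \<beta> M (Suc n) lam k y" for k y
  define \<rho> where "\<rho> k = c k x / c (Suc k) x" for k
  define Cm where "Cm j = mat (Suc n) (Suc n) (\<lambda>(i, k). if k < j then c k (u i) - \<rho> k * c (Suc k) (u i) else c k (u i))" for j
  have lenlam: "length lam = Suc n" using lam by simp
  have lamk: "k \<le> n \<Longrightarrow> lam!k < M" for k using lt lenlam nth_mem[of k lam] by simp
  have mono: "k < n \<Longrightarrow> lam!(Suc k) \<le> lam!k" for k using sorted_wrt_nth_less[OF srt, of k "Suc k"] lenlam by simp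
  have xnz: "x \<noteq> 0" "1 - \<beta> * x \<noteq> 0" using x0 bx0 x_def by auto
  have cnz: "c k x \<noteq> 0" for k using xnz by (simp add: c_def cc_def)
  have HC: "HH \<beta> M (Suc n) lam u = det (Cm 0)"
    unfolding HH_def Cm_def c_def by (rule arg_cong[where f=det]) (rule eq_matI, auto)
  have step: "Cm (Suc j) = addcol (- \<rho> j) j (Suc j) (Cm j)" if "j < n" for j
    by (rule eq_matI) (use that in \<open>auto simp: Cm_def\<close>)
  have detCm: "j \<le> n \<Longrightarrow> det (Cm j) = det (Cm 0)" for j
  proof (induction j)
    case 0 then show ?case by simp
  next
    case (Suc j)
    have "det (Cm (Suc j)) = det (addcol (- \<rho> j) j (Suc j) (Cm j))" using step Suc.prems by simp
    also have "\<dots> = det (Cm j)" by (rule det_addcol[where n="Suc n"]) (use Suc.prems in \<open>auto simp: Cm_def\<close>)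
    finally show ?case using Suc by simp
  qed
  have carr: "Cm n \<in> carrier_mat (Suc n) (Suc n)" by (simp add: Cm_def)
  have "det (Cm n) = (\<Sum>k<Suc n. Cm n $$ (0, k) * cofactor (Cm n) 0 k)"
    by (rule laplace_expansion_row[OF carr]) simp
  also have "\<dots> = Cm n $$ (0, n) * cofactor (Cm n) 0 n"
  proof -
    have "(\<Sum>k<n. Cm n $$ (0, k) * cofactor (Cm n) 0 k) = 0"
    proof (intro sum.neutral ballI)
      fix k assume "k \<in> {..<n}"
      then have "Cm n $$ (0, k) = c k x - \<rho> k * c (Suc k) x" by (simp add: Cm_def x_def)
      also have "\<dots> = 0" using cnz[of "Suc k"] by (simp add: \<rho>_def)
      finally show "Cm n $$ (0, k) * cofactor (Cm n) 0 k = 0" by simp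
    qed
    then show ?thesis by simp
  qed
  also have "\<dots> = c n x * ((-1) ^ n * det (mat_delete (Cm n) 0 n))"
    by (simp add: cofactor_def Cm_def x_def)
  finally have D1: "det (Cm n) = c n x * ((-1) ^ n * det (mat_delete (Cm n) 0 n))" .
  define E where "E k y = (\<Sum>t\<in>{lam!(Suc k)..lam!k}. x ^ (lam!k - t) * (1 - \<beta> * x) ^ (t - lam!(Suc k) - 1)
      * (y ^ (t + (n - 1 - k)) * (1 - \<beta> * y) ^ (M - 1 - t)))" for k y
  have MD: "mat_delete (Cm n) 0 n = mat n n (\<lambda>(i, k). (u (Suc i) - x) * (1 / (1 - \<beta> * x) ^ (lam!k - lam!(Suc k))) * E k (u (Suc i)))"
  proof (rule eq_matI)
    fix i k assume i: "i < dim_row (mat n n (\<lambda>(i, k). (u (Suc i) - x) * (1 / (1 - \<beta> * x) ^ (lam!k - lam!(Suc k))) * E k (u (Suc i))))"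
      and k: "k < dim_col (mat n n (\<lambda>(i, k). (u (Suc i) - x) * (1 / (1 - \<beta> * x) ^ (lam!k - lam!(Suc k))) * E k (u (Suc i))))"
    then have i': "i < n" and k': "k < n" by auto
    have "mat_delete (Cm n) 0 n $$ (i, k) = c k (u (Suc i)) - \<rho> k * c (Suc k) (u (Suc i))"
      using i' k' by (simp add: mat_delete_def Cm_def)
    also have "\<dots> = (u (Suc i) - x) * E k (u (Suc i)) / (1 - \<beta> * x) ^ (lam!k - lam!(Suc k))"
    proof -
      have e1: "Suc n - 1 - k = Suc (n - 1 - k)" using k' by simp
      have e2: "Suc n - 1 - Suc k = n - 1 - k" by simp
      show ?thesis
        unfolding \<rho>_def c_def cc_def e1 e2 E_def
        using colA[OF mono[OF k'] lamk[of k] xnz, where e="n - 1 - k" and y="u (Suc i)"] k' by simp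
    qed
    finally show "mat_delete (Cm n) 0 n $$ (i, k) = mat n n (\<lambda>(i, k). (u (Suc i) - x) * (1 / (1 - \<beta> * x) ^ (lam!k - lam!(Suc k))) * E k (u (Suc i))) $$ (i, k)"
      using i' k' by simp
  qed (auto simp: mat_delete_def Cm_def)
  define T where "T k = {lam!(Suc k)..lam!k}" for k
  define w where "w k t = x ^ (lam!k - t) * (1 - \<beta> * x) ^ (t - lam!(Suc k) - 1)" for k t
  define g where "g k t i = (u (Suc i)) ^ (t + (n - 1 - k)) * (1 - \<beta> * u (Suc i)) ^ (M - 1 - t)" for k t i
  have DE: "det (mat n n (\<lambda>(i, k). E k (u (Suc i)))) = (\<Sum>mu\<in>lset n T. (\<Prod>k<n. w k (mu!k)) * det (mat n n (\<lambda>(i, k). g k (mu!k) i)))"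
  proof -
    have "mat n n (\<lambda>(i, k). E k (u (Suc i))) = mat n n (\<lambda>(i, k). \<Sum>t\<in>T k. w k t * g k t i)"
      by (rule eq_matI) (auto simp: E_def T_def w_def g_def mult.assoc)
    then show ?thesis using det_multilinear_cols[of n T w g] by (simp add: T_def)
  qed
  have lsetT: "lset n T = bx a r"
  proof -
    have "T = (\<lambda>k. {r!k .. (a#r)!k})" by (rule ext) (simp add: T_def lam)
    then show ?thesis using lset_bx[OF lam(2)] by simp
  qed
  have gH: "det (mat n n (\<lambda>(i, k). g k (mu!k) i)) = HH \<beta> M n mu (u \<circ> Suc)" for mu
    unfolding HH_def by (rule arg_cong[where f=det]) (rule eq_matI, auto simp: g_def cc_def)
  have ww: "(\<Prod>k<n. w k (mu!k)) = wt \<beta> x a r mu" if "mu \<in> bx a r" for mu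
  proof -
    have "length mu = length r" using bx_len[OF that] .
    then show ?thesis using wt_prod[of mu r \<beta> x a] lam by (simp add: w_def)
  qed
  have tel: "(\<Prod>k<n. 1 / (1 - \<beta> * x) ^ (lam!k - lam!(Suc k))) = 1 / (1 - \<beta> * x) ^ (a - lam!n)"
  proof -
    have "(\<Prod>k<n. 1 / (1 - \<beta> * x) ^ (lam!k - lam!(Suc k))) = 1 / (\<Prod>k<n. (1 - \<beta> * x) ^ (lam!k - lam!(Suc k)))"
      by (simp add: prod_dividef)
    also have "(\<Prod>k<n. (1 - \<beta> * x) ^ (lam!k - lam!(Suc k))) = (1 - \<beta> * x) ^ (\<Sum>k<n. lam!k - lam!(Suc k))"
      by (simp add: power_sum)
    also have "(\<Sum>k<n. lam!k - lam!(Suc k)) = a - lam!n" using telescope[OF srt lenlam, of n] lam by simp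
    finally show ?thesis .
  qed
  have lastv_eq: "lastv a r = lam ! n" using lastv_nth[of a r] lam by simp
  have cn: "c n x = x ^ (lam!n) * (1 - \<beta> * x) ^ (M - 1 - a) * (1 - \<beta> * x) ^ (a - lam!n)"
  proof -
    have "lam!n \<le> a"
    proof (cases n)
      case 0 then show ?thesis using lam by simp
    next
      case (Suc n') then show ?thesis using sorted_wrt_nth_less[OF srt, of 0 n] lenlam lam by simp
    qed
    moreover have "a < M" using lt lam by simp
    ultimately have "M - 1 - lam!n = (M - 1 - a) + (a - lam!n)" by simp
    then show ?thesis by (simp add: c_def cc_def power_add)
  qed
  have "HH \<beta> M (Suc n) lam u = c n x * ((-1) ^ n * det (mat_delete (Cm n) 0 n))"
    using HC detCm[of n] D1 by simp
  also have "det (mat_delete (Cm n) 0 n) = (\<Prod>i<n. u (Suc i) - x) * (\<Prod>k<n. 1 / (1 - \<beta> * x) ^ (lam!k - lam!(Suc k)))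
      * det (mat n n (\<lambda>(i, k). E k (u (Suc i))))"
    unfolding MD by (rule det_scale)
  also have "det (mat n n (\<lambda>(i, k). E k (u (Suc i)))) = (\<Sum>mu\<in>bx a r. wt \<beta> x a r mu * HH \<beta> M n mu (u \<circ> Suc))"
    unfolding DE lsetT gH by (intro sum.cong refl) (simp add: ww)
  finally have "HH \<beta> M (Suc n) lam u = (x ^ (lam!n) * (1 - \<beta> * x) ^ (M - 1 - a) * (1 - \<beta> * x) ^ (a - lam!n))
      * ((-1) ^ n * ((\<Prod>i<n. u (Suc i) - x) * (1 / (1 - \<beta> * x) ^ (a - lam!n))
      * (\<Sum>mu\<in>bx a r. wt \<beta> x a r mu * HH \<beta> M n mu (u \<circ> Suc))))"
    unfolding cn tel .
  also have "\<dots> = ((\<Prod>i<n. u (Suc i) - x) * (-1) ^ n) * (x ^ (lam!n) * (1 - \<beta> * x) ^ (M - 1 - a)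
      * (\<Sum>mu\<in>bx a r. wt \<beta> x a r mu * HH \<beta> M n mu (u \<circ> Suc)))"
    using xnz by (simp add: field_simps)
  also have "\<dots> = (\<Prod>j<n. u 0 - u (Suc j)) * SB \<beta> M (u 0) lam (\<lambda>mu. HH \<beta> M n mu (u \<circ> Suc))"
    using lastv_eq unfolding prod_neg by (simp add: SB_def lam x_def sum_distrib_left mult_ac)
  finally show ?thesis .
qed

lemma AA_HH:
  fixes u :: "nat \<Rightarrow> complex" and lam :: "nat list"
  assumes "sorted_wrt (\<ge>) lam" "length lam = N" "\<forall>e\<in>set lam. e < M"
    "\<forall>i<N. u i \<noteq> 0 \<and> 1 - \<beta> * u i \<noteq> 0"
  shows "AA \<beta> M N u lam * vandermonde N u = HH \<beta> M N lam u"
  using assms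
proof (induction N arbitrary: u lam)
  case 0
  then show ?case by (simp add: vandermonde_def HH_def)
next
  case (Suc n)
  then obtain a r where lam: "lam = a # r" "length r = n" by (cases lam) auto
  have IH: "AA \<beta> M n (u \<circ> Suc) mu * vandermonde n (u \<circ> Suc) = HH \<beta> M n mu (u \<circ> Suc)"
    if "mu \<in> bx a r" for mu
  proof -
    have "sorted_wrt (\<ge>) mu" using bx_sorted[OF that] .
    moreover have "length mu = n" using bx_len[OF that] lam by simp
    moreover have "\<forall>e\<in>set mu. e < M" using bx_le[OF that] Suc.prems(3) lam by fastforce
    moreover have "\<forall>i<n. (u \<circ> Suc) i \<noteq> 0 \<and> 1 - \<beta> * (u \<circ> Suc) i \<noteq> 0" using Suc.prems(4) by simp
    ultimately show ?thesis using Suc.IH by blast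
  qed
  have "AA \<beta> M (Suc n) u lam * vandermonde (Suc n) u =
      (\<Prod>j<n. u 0 - u (Suc j)) * SB \<beta> M (u 0) lam (\<lambda>mu. vandermonde n (u \<circ> Suc) * AA \<beta> M n (u \<circ> Suc) mu)"
    by (simp add: vandermonde_Suc SB_scale mult_ac)
  also have "\<dots> = (\<Prod>j<n. u 0 - u (Suc j)) * SB \<beta> M (u 0) lam (\<lambda>mu. HH \<beta> M n mu (u \<circ> Suc))"
    using IH lam by (auto intro!: SB_cong simp: mult.commute)
  also have "\<dots> = HH \<beta> M (Suc n) lam u"
    using Branch[OF lam Suc.prems(1,3)] Suc.prems(4) by simp
  finally show ?case .
qed




lemma AA_cong: "(\<And>i. i < N \<Longrightarrow> u i = u' i) \<Longrightarrow> AA \<beta> M N u lam = AA \<beta> M N u' lam"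
proof (induction N arbitrary: u u' lam)
  case 0 then show ?case by simp
next
  case (Suc N)
  have "AA \<beta> M N (u \<circ> Suc) = AA \<beta> M N (u' \<circ> Suc)"
    using Suc.IH[of "u \<circ> Suc" "u' \<circ> Suc"] Suc.prems by (simp add: o_def fun_eq_iff)
  moreover have "u 0 = u' 0" using Suc.prems by simp
  ultimately show ?case by (simp only: AA.simps)
qed

lemma vand_cong: "(\<And>i. i < N \<Longrightarrow> u i = u' i) \<Longrightarrow> vandermonde N u = vandermonde N u'"
  unfolding vandermonde_def by (intro prod.cong) auto

lemma tendsto_wt:
  assumes "(h \<longlongrightarrow> c) F"
  shows "((\<lambda>y. wt \<beta> (h y) a r mu) \<longlongrightarrow> wt \<beta> c a r mu) F"
proof (induction r arbitrary: a mu)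
  case Nil then show ?case by (cases mu) auto
next
  case (Cons b r)
  show ?case
  proof (cases mu)
    case Nil then show ?thesis by simp
  next
    case (Cons y mu')
    show ?thesis unfolding Cons wt.simps
      by (intro tendsto_intros assms Cons.IH)
  qed
qed

definition contF :: "((nat \<Rightarrow> complex) \<Rightarrow> complex) \<Rightarrow> bool" where
  "contF \<Phi> \<longleftrightarrow> (\<forall>(F :: (nat \<Rightarrow> complex) filter) f g. (\<forall>j. ((\<lambda>x. f x j) \<longlongrightarrow> g j) F) \<longrightarrow> ((\<lambda>x. \<Phi> (f x)) \<longlongrightarrow> \<Phi> g) F)"

lemma contF_AA: "contF (\<lambda>u. AA \<beta> M N u lam)"
proof (induction N arbitrary: lam)
  case 0 then show ?case by (simp add: contF_def)
next
  case (Suc N)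
  show ?case unfolding contF_def
  proof (intro allI impI)
    fix F :: "(nat \<Rightarrow> complex) filter" and f :: "(nat \<Rightarrow> complex) \<Rightarrow> nat \<Rightarrow> complex" and g :: "nat \<Rightarrow> complex"
    assume fg: "\<forall>j. ((\<lambda>x. f x j) \<longlongrightarrow> g j) F"
    have IH: "((\<lambda>x. AA \<beta> M N (f x \<circ> Suc) mu) \<longlongrightarrow> AA \<beta> M N (g \<circ> Suc) mu) F" for mu
      using Suc[of mu] fg unfolding contF_def by (auto simp: o_def)
    have f0: "((\<lambda>x. f x 0) \<longlongrightarrow> g 0) F" using fg by simp
    show "((\<lambda>x. AA \<beta> M (Suc N) (f x) lam) \<longlongrightarrow> AA \<beta> M (Suc N) g lam) F"
    proof (cases lam)
      case Nil then show ?thesis by (simp add: SB_def)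
    next
      case (Cons a r)
      show ?thesis unfolding Cons AA.simps SB_def list.case
        by (intro tendsto_intros tendsto_wt f0 IH)
    qed
  qed
qed

lemma contF_rev: "contF \<Phi> \<Longrightarrow> contF (\<lambda>u. \<Phi> (\<lambda>j. u (N - 1 - j)))"
  unfolding contF_def by auto

definition uz :: "complex \<Rightarrow> nat \<Rightarrow> (nat \<Rightarrow> complex) \<Rightarrow> nat \<Rightarrow> complex" where
  "uz \<beta> N w j = (if j < N then w j / (1 + \<beta> * w j) else 0)"

lemma vand_rel:
  assumes "\<forall>j<N. 1 + \<beta> * w j \<noteq> 0" "\<forall>j<N. u j = w j / (1 + \<beta> * w j)"
  shows "vandermonde N w = vandermonde N u * (\<Prod>j<N. (1 + \<beta> * w j) ^ (N - 1))"
  using assms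
proof (induction N arbitrary: w u)
  case 0 then show ?case by (simp add: vandermonde_def)
next
  case (Suc n)
  define D where "D j = 1 + \<beta> * w j" for j
  have Dnz: "j < Suc n \<Longrightarrow> D j \<noteq> 0" for j using Suc.prems D_def by auto
  have fac: "w 0 - w (Suc j) = (u 0 - u (Suc j)) * D 0 * D (Suc j)" if "j < n" for j
  proof -
    have "u 0 = w 0 / D 0" "u (Suc j) = w (Suc j) / D (Suc j)" using Suc.prems that by (auto simp: D_def)
    then show ?thesis using Dnz[of 0] Dnz[of "Suc j"] that by (simp add: field_simps D_def)
  qed
  have IH: "vandermonde n (w \<circ> Suc) = vandermonde n (u \<circ> Suc) * (\<Prod>j<n. D (Suc j) ^ (n - 1))"
    using Suc.IH[of "w \<circ> Suc" "u \<circ> Suc"] Suc.prems by (simp add: D_def o_def)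
  have "vandermonde (Suc n) w = (\<Prod>j<n. (u 0 - u (Suc j)) * D 0 * D (Suc j)) * vandermonde n (w \<circ> Suc)"
    by (simp add: vandermonde_Suc fac)
  also have "\<dots> = ((\<Prod>j<n. u 0 - u (Suc j)) * vandermonde n (u \<circ> Suc)) * (D 0 ^ n * (\<Prod>j<n. D (Suc j) * D (Suc j) ^ (n - 1)))"
    by (simp add: IH prod.distrib mult_ac)
  also have "(\<Prod>j<n. D (Suc j) * D (Suc j) ^ (n - 1)) = (\<Prod>j<n. D (Suc j) ^ n)"
    by (intro prod.cong refl) (metis Suc_pred' gr_implies_not0 lessThan_iff not_less_zero power_Suc zero_less_iff_neq_zero)
  also have "D 0 ^ n * (\<Prod>j<n. D (Suc j) ^ n) = (\<Prod>j<Suc n. D j ^ (Suc n - 1))"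
    by (simp add: prod.lessThan_Suc_shift del: prod.lessThan_Suc)
  finally show ?case by (simp add: vandermonde_Suc D_def o_def)
qed

lemma pow_lemma:
  fixes d w :: complex
  assumes "d \<noteq> 0"
  shows "d ^ (k + (a + m)) * ((w / d) ^ a * (1 / d) ^ m) = w ^ a * d ^ k"
proof -
  have "d ^ (k + (a + m)) = d ^ k * (d ^ a * d ^ m)" by (simp add: power_add)
  moreover have "(w / d) ^ a = w ^ a / d ^ a" by (rule power_divide)
  moreover have "(1 / d) ^ m = 1 / d ^ m" by (simp add: power_one_over)
  moreover have "d ^ a \<noteq> 0" "d ^ m \<noteq> 0" using assms by auto
  ultimately show ?thesis using assms by (simp add: field_simps)
qed

lemma groth_eval:
  fixes w :: "nat \<Rightarrow> complex" and lam :: "nat list"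
  assumes valid: "\<forall>j<N. w j \<noteq> 0 \<and> 1 + \<beta> * w j \<noteq> 0" and inj: "inj_on w {..<N}"
    and len: "length lam = N" and lt: "\<forall>e\<in>set lam. e < M"
    and HA: "\<And>u. \<forall>i<N. u i \<noteq> 0 \<and> 1 - \<beta> * u i \<noteq> 0 \<Longrightarrow> \<Phi> u * vandermonde N u = HH \<beta> M N lam u"
  shows "groth_ratio N lam \<beta> w = \<Phi> (uz \<beta> N w) * (\<Prod>j<N. (1 + \<beta> * w j) ^ (M - 1))"
proof -
  let ?u = "uz \<beta> N w"
  define D where "D j = 1 + \<beta> * w j" for j
  define E where "E = (M - 1) + (N - 1)"
  have Dnz: "j < N \<Longrightarrow> D j \<noteq> 0" for j using valid D_def by auto
  have ueq: "j < N \<Longrightarrow> ?u j = w j / D j" for j by (simp add: uz_def D_def)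
  have one: "j < N \<Longrightarrow> 1 - \<beta> * ?u j = 1 / D j" for j
    using Dnz[of j] by (simp add: ueq field_simps D_def)
  have uval: "\<forall>i<N. ?u i \<noteq> 0 \<and> 1 - \<beta> * ?u i \<noteq> 0"
  proof (intro allI impI conjI)
    fix i assume i: "i < N"
    show "?u i \<noteq> 0" using ueq[OF i] Dnz[OF i] valid i by simp
    show "1 - \<beta> * ?u i \<noteq> 0" unfolding one[OF i] using Dnz[OF i] by simp
  qed
  have detZ: "det (mat N N (\<lambda>(j, k). w j ^ (lam!k + (N - 1 - k)) * (1 + \<beta> * w j) ^ k))
      = (\<Prod>j<N. D j ^ E) * HH \<beta> M N lam ?u"
  proof -
    have "mat N N (\<lambda>(j, k). w j ^ (lam!k + (N - 1 - k)) * (1 + \<beta> * w j) ^ k)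
        = mat N N (\<lambda>(j, k). D j ^ E * 1 * cc \<beta> M N lam k (?u j))"
    proof (rule eq_matI)
      fix j k assume jk: "j < dim_row (mat N N (\<lambda>(j, k). D j ^ E * 1 * cc \<beta> M N lam k (?u j)))"
        "k < dim_col (mat N N (\<lambda>(j, k). D j ^ E * 1 * cc \<beta> M N lam k (?u j)))"
      then have j: "j < N" and k: "k < N" by auto
      define a where "a = lam!k + (N - 1 - k)"
      define m where "m = M - 1 - lam!k"
      have l: "lam!k < M" using lt len k by (simp add: nth_mem)
      have Ee: "E = k + (a + m)" using l k by (simp add: E_def a_def m_def)
      have "D j ^ E * 1 * cc \<beta> M N lam k (?u j) = D j ^ E * ((w j / D j) ^ a * (1 / D j) ^ m)"
        unfolding cc_def unfolding one[OF j] unfolding ueq[OF j] a_def m_def by simp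
      also have "\<dots> = w j ^ a * D j ^ k"
        unfolding Ee using Dnz[OF j] by (rule pow_lemma)
      finally have c: "D j ^ E * 1 * cc \<beta> M N lam k (?u j) = w j ^ a * D j ^ k" .
      have lhs: "mat N N (\<lambda>(j, k). w j ^ (lam!k + (N - 1 - k)) * (1 + \<beta> * w j) ^ k) $$ (j, k) = w j ^ a * D j ^ k"
        using j k by (simp add: a_def D_def)
      have rhs: "mat N N (\<lambda>(j, k). D j ^ E * 1 * cc \<beta> M N lam k (?u j)) $$ (j, k) = D j ^ E * 1 * cc \<beta> M N lam k (?u j)"
        using j k by (simp only: index_mat(1) prod.case)
      show "mat N N (\<lambda>(j, k). w j ^ (lam!k + (N - 1 - k)) * (1 + \<beta> * w j) ^ k) $$ (j, k)
          = mat N N (\<lambda>(j, k). D j ^ E * 1 * cc \<beta> M N lam k (?u j)) $$ (j, k)"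
        unfolding lhs rhs c ..
    qed auto
    then show ?thesis using det_scale[of N "\<lambda>j. D j ^ E" "\<lambda>k. 1" "\<lambda>j k. cc \<beta> M N lam k (?u j)"]
      by (simp add: HH_def)
  qed
  have V: "vandermonde N w = vandermonde N ?u * (\<Prod>j<N. D j ^ (N - 1))"
    using vand_rel[of N \<beta> w ?u] valid ueq by (simp add: D_def)
  have Vnz: "vandermonde N w \<noteq> 0"
  proof -
    have fin: "finite {(j, k). j < k \<and> k < N}" by (rule finite_subset[of _ "{..<N} \<times> {..<N}"]) auto
    have "\<forall>p\<in>{(j, k). j < k \<and> k < N}. (case p of (j, k) \<Rightarrow> w j - w k) \<noteq> 0"
      using inj by (auto simp: inj_on_def)
    then show ?thesis unfolding vandermonde_def using fin by simp
  qed
  have Vu: "vandermonde N ?u \<noteq> 0" using V Vnz by auto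
  have HH: "HH \<beta> M N lam ?u = \<Phi> ?u * vandermonde N ?u" using HA[OF uval] by simp
  have PD: "(\<Prod>j<N. D j ^ (N - 1)) \<noteq> 0" using Dnz by simp
  have "groth_ratio N lam \<beta> w = (\<Prod>j<N. D j ^ E) * (\<Phi> ?u * vandermonde N ?u) / (vandermonde N ?u * (\<Prod>j<N. D j ^ (N - 1)))"
    unfolding groth_ratio_def detZ V HH ..
  also have "(\<Prod>j<N. D j ^ E) = (\<Prod>j<N. D j ^ (M - 1)) * (\<Prod>j<N. D j ^ (N - 1))"
    unfolding E_def power_add prod.distrib ..
  finally have eq: "groth_ratio N lam \<beta> w = (\<Prod>j<N. D j ^ (M - 1)) * (\<Prod>j<N. D j ^ (N - 1)) * (\<Phi> ?u * vandermonde N ?u) / (vandermonde N ?u * (\<Prod>j<N. D j ^ (N - 1)))" .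
  have "(\<Prod>j<N. D j ^ (M - 1)) * (\<Prod>j<N. D j ^ (N - 1)) * (\<Phi> ?u * vandermonde N ?u) / (vandermonde N ?u * (\<Prod>j<N. D j ^ (N - 1)))
     = \<Phi> ?u * (\<Prod>j<N. D j ^ (M - 1))"
  proof -
    have nz: "vandermonde N ?u * (\<Prod>j<N. D j ^ (N - 1)) \<noteq> 0" using Vu PD by simp
    have "(\<Prod>j<N. D j ^ (M - 1)) * (\<Prod>j<N. D j ^ (N - 1)) * (\<Phi> ?u * vandermonde N ?u)
      = (\<Phi> ?u * (\<Prod>j<N. D j ^ (M - 1))) * (vandermonde N ?u * (\<Prod>j<N. D j ^ (N - 1)))" by (simp only: mult_ac)
    then show ?thesis by (simp only: nonzero_mult_div_cancel_right[OF nz])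
  qed
  then show ?thesis using eq by (simp add: D_def)
qed

lemma coord_tendsto: "((\<lambda>w::nat \<Rightarrow> complex. w j) \<longlongrightarrow> z j) (at z within S)"
proof -
  have c: "continuous_on UNIV (\<lambda>w::nat \<Rightarrow> complex. w j)" by (rule continuous_on_product_coordinates)
  have "continuous (at z within UNIV) (\<lambda>w::nat \<Rightarrow> complex. w j)"
    using c unfolding continuous_on_eq_continuous_within by blast
  then have "isCont (\<lambda>w::nat \<Rightarrow> complex. w j) z" by simp
  then have "continuous (at z within S) (\<lambda>w::nat \<Rightarrow> complex. w j)" by (rule continuous_at_imp_continuous_at_within)
  then show ?thesis unfolding continuous_within by simp
qed




lemma limpt:
  fixes z :: "nat \<Rightarrow> complex"
  assumes N0: "0 < N"
  shows "z islimpt {w. inj_on w {..<N} \<and> (\<forall>k\<ge>N. w k = z k)}"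
proof (rule islimptI)
  fix T :: "(nat \<Rightarrow> complex) set" assume zT: "z \<in> T" and oT: "open T"
  define \<gamma> where "\<gamma> t = (\<lambda>j. z j + (if j < N then t * of_nat (Suc j) else 0))" for t :: complex
  have c\<gamma>: "continuous_on UNIV \<gamma>"
  proof (rule continuous_on_coordinatewise_then_product)
    fix i show "continuous_on UNIV (\<lambda>t. \<gamma> t i)"
      by (cases "i < N") (auto simp: \<gamma>_def intro!: continuous_intros)
  qed
  have o: "open (\<gamma> -` T)" using c\<gamma> oT continuous_on_open_vimage[of UNIV \<gamma>] by auto
  have "\<gamma> 0 = z" by (rule ext) (simp add: \<gamma>_def)
  then have "0 \<in> \<gamma> -` T" using zT by simp
  then obtain \<epsilon> where \<epsilon>: "\<epsilon> > 0" "ball 0 \<epsilon> \<subseteq> \<gamma> -` T" using o open_contains_ball by blast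
  define B where "B = insert 0 ((\<lambda>(j, k). (z k - z j) / (of_nat j - of_nat k)) ` ({..<N} \<times> {..<N}))"
  have fB: "finite B" by (simp add: B_def)
  define C where "C = range (\<lambda>m::nat. complex_of_real (\<epsilon> / (real m + 2)))"
  have "inj (\<lambda>m::nat. complex_of_real (\<epsilon> / (real m + 2)))"
    using \<epsilon>(1) by (auto simp: inj_on_def field_simps)
  then have iC: "infinite C" unfolding C_def using range_inj_infinite by blast
  then have "infinite (C - B)" using fB by (rule Diff_infinite_finite[rotated])
  then obtain t where t: "t \<in> C" "t \<notin> B" by (metis Diff_iff finite.emptyI infinite_imp_nonempty ex_in_conv)
  have tball: "t \<in> ball 0 \<epsilon>"
  proof -
    obtain m :: nat where tm: "t = complex_of_real (\<epsilon> / (real m + 2))" using t(1) C_def by auto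
    have "\<epsilon> / (real m + 2) < \<epsilon> / 1" by (rule divide_strict_left_mono) (use \<epsilon>(1) in auto)
    moreover have "\<epsilon> / (real m + 2) > 0" using \<epsilon>(1) by simp
    moreover have "norm (complex_of_real (\<epsilon> / (real m + 2))) = \<bar>\<epsilon> / (real m + 2)\<bar>" by (rule norm_of_real)
    ultimately have "norm t < \<epsilon>" using tm by simp
    then show ?thesis by (simp add: dist_norm)
  qed
  have t0: "t \<noteq> 0" using t(2) B_def by auto
  have inT: "\<gamma> t \<in> T" using tball \<epsilon>(2) by auto
  have ne: "\<gamma> t \<noteq> z"
  proof
    assume "\<gamma> t = z"
    then have "\<gamma> t 0 = z 0" by simp
    then show False using N0 t0 by (simp add: \<gamma>_def)
  qed
  have inj: "inj_on (\<gamma> t) {..<N}"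
  proof (rule inj_onI)
    fix j k assume j: "j \<in> {..<N}" and k: "k \<in> {..<N}" and e: "\<gamma> t j = \<gamma> t k"
    show "j = k"
    proof (rule ccontr)
      assume jk: "j \<noteq> k"
      have d: "(of_nat j - of_nat k :: complex) \<noteq> 0" using jk by simp
      have "z j + t * of_nat (Suc j) = z k + t * of_nat (Suc k)" using e j k by (simp add: \<gamma>_def)
      then have "t * (of_nat j - of_nat k) = z k - z j" by (simp add: algebra_simps)
      then have "t = (z k - z j) / (of_nat j - of_nat k)" using d by (simp add: field_simps)
      then have "t \<in> B" using j k unfolding B_def by auto
      then show False using t(2) by simp
    qed
  qed
  have "\<gamma> t \<in> {w. inj_on w {..<N} \<and> (\<forall>k\<ge>N. w k = z k)}" using inj by (auto simp: \<gamma>_def)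
  then show "\<exists>y\<in>{w. inj_on w {..<N} \<and> (\<forall>k\<ge>N. w k = z k)}. y \<in> T \<and> y \<noteq> z" using inT ne by blast
qed

lemma groth_full:
  fixes z :: "nat \<Rightarrow> complex" and lam :: "nat list"
  assumes valid: "\<forall>j<N. z j \<noteq> 0 \<and> 1 + \<beta> * z j \<noteq> 0"
    and len: "length lam = N" and lt: "\<forall>e\<in>set lam. e < M"
    and HA: "\<And>u. \<forall>i<N. u i \<noteq> 0 \<and> 1 - \<beta> * u i \<noteq> 0 \<Longrightarrow> \<Phi> u * vandermonde N u = HH \<beta> M N lam u"
    and cF: "contF \<Phi>"
  shows "grothendieck N lam \<beta> z = \<Phi> (uz \<beta> N z) * (\<Prod>j<N. (1 + \<beta> * z j) ^ (M - 1))"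
proof (cases "inj_on z {..<N}")
  case True
  then show ?thesis using groth_eval[OF valid True len lt HA] by (simp add: grothendieck_def)
next
  case False
  have N0: "0 < N" using False by (cases N) auto
  define S where "S = {w. inj_on w {..<N} \<and> (\<forall>k\<ge>N. w k = z k)}"
  define \<Psi> where "\<Psi> w = \<Phi> (uz \<beta> N w) * (\<Prod>j<N. (1 + \<beta> * w j) ^ (M - 1))" for w
  let ?F = "at z within S"
  have ntriv: "\<not> trivial_limit ?F" using limpt[OF N0, of z] trivial_limit_within S_def by auto
  have coord: "((\<lambda>w. w j) \<longlongrightarrow> z j) ?F" for j by (rule coord_tendsto)
  have uzt: "((\<lambda>w. uz \<beta> N w j) \<longlongrightarrow> uz \<beta> N z j) ?F" for j
  proof (cases "j < N")
    case True
    have "((\<lambda>w. w j / (1 + \<beta> * w j)) \<longlongrightarrow> z j / (1 + \<beta> * z j)) ?F"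
      using valid True by (intro tendsto_intros coord) auto
    then show ?thesis using True by (simp add: uz_def)
  next
    case False then show ?thesis by (simp add: uz_def)
  qed
  have \<Psi>t: "(\<Psi> \<longlongrightarrow> \<Psi> z) ?F"
  proof -
    have "((\<lambda>w. \<Phi> (uz \<beta> N w)) \<longlongrightarrow> \<Phi> (uz \<beta> N z)) ?F"
      using cF uzt unfolding contF_def by blast
    moreover have "((\<lambda>w. \<Prod>j<N. (1 + \<beta> * w j) ^ (M - 1)) \<longlongrightarrow> (\<Prod>j<N. (1 + \<beta> * z j) ^ (M - 1))) ?F"
      by (intro tendsto_intros coord)
    ultimately show ?thesis unfolding \<Psi>_def by (rule tendsto_mult)
  qed
  have evS: "eventually (\<lambda>w. w \<in> S) ?F"
    unfolding eventually_at_filter by simp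
  have evV: "eventually (\<lambda>w. \<forall>j\<in>{..<N}. w j \<noteq> 0 \<and> 1 + \<beta> * w j \<noteq> 0) ?F"
  proof (rule eventually_ball_finite)
    show "finite {..<N}" by simp
    show "\<forall>j\<in>{..<N}. eventually (\<lambda>w. w j \<noteq> 0 \<and> 1 + \<beta> * w j \<noteq> 0) ?F"
    proof
      fix j assume j: "j \<in> {..<N}"
      have "eventually (\<lambda>w. w j \<noteq> 0) ?F"
        using tendsto_imp_eventually_ne[OF coord[of j]] valid j by auto
      moreover have "eventually (\<lambda>w. 1 + \<beta> * w j \<noteq> 0) ?F"
      proof -
        have "((\<lambda>w. 1 + \<beta> * w j) \<longlongrightarrow> 1 + \<beta> * z j) ?F" by (intro tendsto_intros coord)
        then show ?thesis using tendsto_imp_eventually_ne valid j by fastforce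
      qed
      ultimately show "eventually (\<lambda>w. w j \<noteq> 0 \<and> 1 + \<beta> * w j \<noteq> 0) ?F"
        by (rule eventually_conj)
    qed
  qed
  have ev: "eventually (\<lambda>w. \<Psi> w = groth_ratio N lam \<beta> w) ?F"
    using evS evV
  proof eventually_elim
    case (elim w)
    then have vw: "\<forall>j<N. w j \<noteq> 0 \<and> 1 + \<beta> * w j \<noteq> 0" and iw: "inj_on w {..<N}"
      by (auto simp: S_def)
    show ?case using groth_eval[OF vw iw len lt HA] by (simp add: \<Psi>_def)
  qed
  have "(groth_ratio N lam \<beta> \<longlongrightarrow> \<Psi> z) ?F" by (rule Lim_transform_eventually[OF \<Psi>t ev])
  then have "Lim ?F (groth_ratio N lam \<beta>) = \<Psi> z" by (rule tendsto_Lim[OF ntriv])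
  then show ?thesis using False by (simp add: grothendieck_def S_def \<Psi>_def)
qed




lemma sorted_rep: "sorted_wrt (\<ge>) (replicate c (a::nat))"
  by (induction c) auto

lemma partition_of_props:
  "length (partition_of n) = sum_list n \<and> sorted_wrt (\<ge>) (partition_of n)"
proof (induction n rule: rev_induct)
  case Nil then show ?case by (simp add: partition_of_def)
next
  case (snoc c n)
  have p: "partition_of (n @ [c]) = replicate c (length n) @ partition_of n"
    by (rule partition_of_snoc) simp
  have lt: "\<forall>e\<in>set (partition_of n). e < length n" using partition_of_lt by blast
  show ?case using snoc lt sorted_rep[of c "length n"] unfolding p by (auto simp: sorted_wrt_append)
qed

lemma rev_upt_map: "rev [0..<M] = map (\<lambda>k. M - 1 - k) [0..<M]"
  by (rule nth_equalityI) (auto simp: rev_nth)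

lemma partition_of_rev:
  assumes "length n = M"
  shows "partition_of (rev n) = dual_partition M (partition_of n)"
proof -
  have "dual_partition M (partition_of n) = concat (map (\<lambda>k. replicate (n!k) (M - 1 - k)) [0..<M])"
    using assms by (simp add: dual_partition_def partition_of_def rev_concat rev_map map_concat o_def)
  also have "\<dots> = concat (map (\<lambda>k. replicate (rev n ! k) k) (rev [0..<M]))"
  proof -
    have "map (\<lambda>k. replicate (rev n ! k) k) (rev [0..<M]) = map (\<lambda>k. replicate (n!k) (M - 1 - k)) [0..<M]"
      unfolding rev_upt_map using assms by (auto simp: rev_nth)
    then show ?thesis by simp
  qed
  also have "\<dots> = partition_of (rev n)" using assms by (simp add: partition_of_def)
  finally show ?thesis by simp
qed

lemma AA_zero: "AA \<beta> 1 N u (replicate N 0) = 1"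
proof (induction N arbitrary: u)
  case 0 then show ?case by simp
next
  case (Suc N)
  have "AA \<beta> 1 (Suc N) u (replicate (Suc N) 0) = AA \<beta> 1 N (u \<circ> Suc) (replicate N 0)"
    using bx_rep0[of N] wt_rep[of \<beta> "u 0" 0 N "[]" "[]"] lastv_rep[of 0 N "[]"]
    by (simp add: SB_def)
  then show ?case using Suc by simp
qed

lemma vdm_det:
  assumes "\<forall>i<N. u i \<noteq> 0"
  shows "det (mat N N (\<lambda>(i, k). u i ^ (N - 1 - k))) = vandermonde N u"
proof -
  have "AA 0 1 N u (replicate N 0) * vandermonde N u = HH 0 1 N (replicate N 0) u"
    by (rule AA_HH) (use assms sorted_rep in auto)
  moreover have "HH 0 1 N (replicate N 0) u = det (mat N N (\<lambda>(i, k). u i ^ (N - 1 - k)))"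
    unfolding HH_def by (rule arg_cong[where f=det]) (rule eq_matI, auto simp: cc_def)
  ultimately show ?thesis using AA_zero[of 0 N u] by simp
qed

definition revp :: "nat \<Rightarrow> nat \<Rightarrow> nat" where
  "revp N i = (if i < N then N - 1 - i else i)"

lemma revp_permutes: "revp N permutes {0..<N}"
proof (rule bij_imp_permutes)
  show "bij_betw (revp N) {0..<N} {0..<N}"
    by (rule bij_betwI[where g="revp N"]) (auto simp: revp_def)
  show "\<And>x. x \<notin> {0..<N} \<Longrightarrow> revp N x = x" by (auto simp: revp_def)
qed

lemma det_rev_rows:
  fixes f :: "complex \<Rightarrow> nat \<Rightarrow> complex"
  shows "det (mat N N (\<lambda>(i, k). f (u (N - 1 - i)) k)) = signof (revp N) * det (mat N N (\<lambda>(i, k). f (u i) k))"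
proof -
  have "mat N N (\<lambda>(i, k). f (u (N - 1 - i)) k) = mat N N (\<lambda>(i, k). mat N N (\<lambda>(i, k). f (u i) k) $$ (revp N i, k))"
    by (rule eq_matI) (auto simp: revp_def)
  then show ?thesis using det_permute_rows[OF _ revp_permutes, of "mat N N (\<lambda>(i, k). f (u i) k)"] by simp
qed

lemma signof_nz: "(signof p :: complex) \<noteq> 0"
  by (simp add: sign_def)

lemma HA_rev:
  fixes lam :: "nat list"
  assumes "sorted_wrt (\<ge>) lam" "length lam = N" "\<forall>e\<in>set lam. e < M"
    and u: "\<forall>i<N. u i \<noteq> 0 \<and> 1 - \<beta> * u i \<noteq> 0"
  shows "AA \<beta> M N (\<lambda>j. u (N - 1 - j)) lam * vandermonde N u = HH \<beta> M N lam u"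
proof -
  let ?ur = "\<lambda>j. u (N - 1 - j)"
  have ur: "\<forall>i<N. ?ur i \<noteq> 0 \<and> 1 - \<beta> * ?ur i \<noteq> 0" using u by auto
  have A: "AA \<beta> M N ?ur lam * vandermonde N ?ur = HH \<beta> M N lam ?ur"
    by (rule AA_HH[OF assms(1-3) ur])
  have V: "vandermonde N ?ur = signof (revp N) * vandermonde N u"
  proof -
    have "vandermonde N ?ur = det (mat N N (\<lambda>(i, k). ?ur i ^ (N - 1 - k)))"
      using vdm_det[of N ?ur] ur by simp
    also have "\<dots> = signof (revp N) * det (mat N N (\<lambda>(i, k). u i ^ (N - 1 - k)))"
      using det_rev_rows[where f="\<lambda>y k. y ^ (N - 1 - k)" and N=N and u=u] by simp
    also have "det (mat N N (\<lambda>(i, k). u i ^ (N - 1 - k))) = vandermonde N u"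
      using vdm_det[of N u] u by simp
    finally show ?thesis .
  qed
  have H: "HH \<beta> M N lam ?ur = signof (revp N) * HH \<beta> M N lam u"
    unfolding HH_def using det_rev_rows[where f="\<lambda>y k. cc \<beta> M N lam k y" and N=N and u=u] by simp
  from A V H have "signof (revp N) * (AA \<beta> M N ?ur lam * vandermonde N u) = signof (revp N) * HH \<beta> M N lam u"
    by (simp add: mult_ac)
  then show ?thesis using signof_nz[of "revp N"] by simp
qed




lemma pointfacts:
  fixes v \<beta> :: complex
  assumes v0: "v \<noteq> 0" and vb: "inverse (v ^ 2) \<noteq> \<beta>"
  shows "1 - \<beta> * v^2 \<noteq> 0"
    and "inverse (inverse (v ^ 2) - \<beta>) = v^2 / (1 - \<beta> * v^2)"
    and "inverse (inverse (v ^ 2) - \<beta>) \<noteq> 0"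
    and "1 + \<beta> * inverse (inverse (v ^ 2) - \<beta>) \<noteq> 0"
    and "inverse (inverse (v ^ 2) - \<beta>) / (1 + \<beta> * inverse (inverse (v ^ 2) - \<beta>)) = v^2"
    and "M \<ge> 1 \<Longrightarrow> (inverse v - \<beta> * v) ^ (M - 1) * (1 + \<beta> * inverse (inverse (v ^ 2) - \<beta>)) ^ (M - 1) * v ^ M = v"
proof -
  have u0: "v^2 \<noteq> 0" using v0 by simp
  show h1: "1 - \<beta> * v^2 \<noteq> 0"
  proof
    assume "1 - \<beta> * v^2 = 0"
    then have "\<beta> = inverse (v^2)" using u0 by (simp add: field_simps)
    then show False using vb by simp
  qed
  show h2: "inverse (inverse (v ^ 2) - \<beta>) = v^2 / (1 - \<beta> * v^2)"
    using u0 h1 by (simp add: field_simps inverse_eq_divide)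
  show "inverse (inverse (v ^ 2) - \<beta>) \<noteq> 0" unfolding h2 using u0 h1 by simp
  have h3: "1 + \<beta> * inverse (inverse (v ^ 2) - \<beta>) = 1 / (1 - \<beta> * v^2)"
    unfolding h2 using h1 by (simp add: field_simps)
  show "1 + \<beta> * inverse (inverse (v ^ 2) - \<beta>) \<noteq> 0" unfolding h3 using h1 by simp
  show "inverse (inverse (v ^ 2) - \<beta>) / (1 + \<beta> * inverse (inverse (v ^ 2) - \<beta>)) = v^2"
    unfolding h3 unfolding h2 using h1 by (simp add: divide_divide_eq_right)
  assume M: "M \<ge> 1"
  have "(inverse v - \<beta> * v) * (1 + \<beta> * inverse (inverse (v ^ 2) - \<beta>)) = inverse v"
    unfolding h3 using h1 v0 by (simp add: field_simps power2_eq_square)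
  then have "(inverse v - \<beta> * v) ^ (M - 1) * (1 + \<beta> * inverse (inverse (v ^ 2) - \<beta>)) ^ (M - 1) = inverse v ^ (M - 1)"
    by (metis power_mult_distrib)
  moreover have "inverse v ^ (M - 1) * v ^ M = v"
  proof -
    have "v ^ M = v ^ (M - 1) * v" using M by (cases M) auto
    then show ?thesis using v0 by (simp add: power_inverse[symmetric] field_simps)
  qed
  ultimately show "(inverse v - \<beta> * v) ^ (M - 1) * (1 + \<beta> * inverse (inverse (v ^ 2) - \<beta>)) ^ (M - 1) * v ^ M = v"
    by simp
qed

theorem mainTheorem8:
  fixes \<beta> :: complex and M N :: nat and v :: "nat \<Rightarrow> complex" and n :: "nat list"
  assumes "M \<ge> 1"
    and "\<forall>j<N. v j \<noteq> 0"
    and "\<forall>j<N. inverse (v j ^ 2) \<noteq> \<beta>"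
    and "length n = M"
    and "sum_list n = N"
  shows "amp_ket \<beta> M N v n =
           (\<Prod>j<N. (inverse (v j) - \<beta> * v j) ^ (M - 1))
           * grothendieck N (partition_of n) \<beta> (\<lambda>j. inverse (inverse (v j ^ 2) - \<beta>))
       \<and> amp_bra \<beta> M N v n =
           (\<Prod>j<N. (inverse (v j) - \<beta> * v j) ^ (M - 1))
           * grothendieck N (dual_partition M (partition_of n)) \<beta> (\<lambda>j. inverse (inverse (v j ^ 2) - \<beta>))"
proof -
  note M1 = assms(1) and v0 = assms(2) and vb = assms(3) and ln = assms(4) and sn = assms(5)
  define z where "z = (\<lambda>j. inverse (inverse (v j ^ 2) - \<beta>))"
  define lam where "lam = partition_of n"
  define lamD where "lamD = dual_partition M lam"
  have lamP: "length lam = N" "sorted_wrt (\<ge>) lam" "\<forall>e\<in>set lam. e < M"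
    using partition_of_props[of n] partition_of_lt[of _ n] sn ln by (auto simp: lam_def)
  have lamDe: "lamD = partition_of (rev n)" using partition_of_rev[OF ln] by (simp add: lamD_def lam_def)
  have lamDP: "length lamD = N" "sorted_wrt (\<ge>) lamD" "\<forall>e\<in>set lamD. e < M"
    using partition_of_props[of "rev n"] partition_of_lt[of _ "rev n"] sn ln by (auto simp: lamDe)
  have zval: "\<forall>j<N. z j \<noteq> 0 \<and> 1 + \<beta> * z j \<noteq> 0"
    using pointfacts(3,4) v0 vb by (simp add: z_def)
  have uzz: "uz \<beta> N z j = v j ^ 2" if "j < N" for j
    using pointfacts(5)[of "v j" \<beta>] v0 vb that by (simp add: uz_def z_def)
  define pre where "pre = (\<Prod>j<N. (inverse (v j) - \<beta> * v j) ^ (M - 1))"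
  define R where "R = (\<Prod>j<N. (1 + \<beta> * z j) ^ (M - 1))"
  define P where "P = (\<Prod>j<N. v j ^ M)"
  have PR: "pre * R * P = (\<Prod>j<N. v j)"
  proof -
    have "pre * R * P = (\<Prod>j<N. (inverse (v j) - \<beta> * v j) ^ (M - 1) * (1 + \<beta> * z j) ^ (M - 1) * v j ^ M)"
      by (simp add: pre_def R_def P_def prod.distrib)
    also have "\<dots> = (\<Prod>j<N. v j)"
      using pointfacts(6)[OF _ _ M1] v0 vb by (intro prod.cong refl) (simp add: z_def)
    finally show ?thesis .
  qed
  have Pnz: "P \<noteq> 0" using v0 by (simp add: P_def)
  have ket: "amp_ket \<beta> M N v n = pre * grothendieck N lam \<beta> z"
  proof -
    have G: "grothendieck N lam \<beta> z = AA \<beta> M N (uz \<beta> N z) lam * R"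
      unfolding R_def
    proof (rule groth_full[OF zval lamP(1) lamP(3)])
      fix u :: "nat \<Rightarrow> complex" assume "\<forall>i<N. u i \<noteq> 0 \<and> 1 - \<beta> * u i \<noteq> 0"
      then show "AA \<beta> M N u lam * vandermonde N u = HH \<beta> M N lam u"
        by (rule AA_HH[OF lamP(2) lamP(1) lamP(3)])
    next
      show "contF (\<lambda>u. AA \<beta> M N u lam)" by (rule contF_AA)
    qed
    have A: "AA \<beta> M N (uz \<beta> N z) lam = AA \<beta> M N (\<lambda>j. (v j)^2) lam"
      by (rule AA_cong) (simp add: uzz)
    have K: "amp_ket \<beta> M N v n * P = (\<Prod>j<N. v j) * AA \<beta> M N (\<lambda>j. (v j)^2) lam"
      using ket_formula[OF M1 v0 ln] by (simp add: P_def lam_def)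
    have "amp_ket \<beta> M N v n * P = (pre * grothendieck N lam \<beta> z) * P"
      using K PR by (simp add: G A mult_ac)
    then show ?thesis using Pnz by simp
  qed
  have bra: "amp_bra \<beta> M N v n = pre * grothendieck N lamD \<beta> z"
  proof -
    have G: "grothendieck N lamD \<beta> z = AA \<beta> M N (\<lambda>j. uz \<beta> N z (N - 1 - j)) lamD * R"
      unfolding R_def
    proof (rule groth_full[OF zval lamDP(1) lamDP(3), where \<Phi>="\<lambda>u. AA \<beta> M N (\<lambda>j. u (N - 1 - j)) lamD"])
      fix u :: "nat \<Rightarrow> complex" assume "\<forall>i<N. u i \<noteq> 0 \<and> 1 - \<beta> * u i \<noteq> 0"
      then show "AA \<beta> M N (\<lambda>j. u (N - 1 - j)) lamD * vandermonde N u = HH \<beta> M N lamD u"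
        by (rule HA_rev[OF lamDP(2) lamDP(1) lamDP(3)])
    next
      show "contF (\<lambda>u. AA \<beta> M N (\<lambda>j. u (N - 1 - j)) lamD)" by (rule contF_rev[OF contF_AA])
    qed
    have A: "AA \<beta> M N (\<lambda>j. uz \<beta> N z (N - 1 - j)) lamD = AA \<beta> M N (\<lambda>j. (v (N - 1 - j))^2) lamD"
      by (rule AA_cong) (simp add: uzz)
    have K: "amp_bra \<beta> M N v n * P = (\<Prod>j<N. v j) * AA \<beta> M N (\<lambda>j. (v (N - 1 - j))^2) lamD"
      using bra_formula[OF M1 v0 ln] by (simp add: P_def lamDe)
    have "amp_bra \<beta> M N v n * P = (pre * grothendieck N lamD \<beta> z) * P"
      using K PR unfolding G A by (simp add: mult_ac)
    then show ?thesis using Pnz by simp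
  qed
  show ?thesis using ket bra by (simp add: pre_def z_def lam_def lamD_def)
qed


end
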